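(* Let $x_1,x_2,\ldots$ be independent and identically distributed with true density $f_0$. For $j=1,2$ let $M_j=\{f_j(x\mid\theta_j),\,\pi_j(\theta_j),\,\theta_j\in\mathbb{F}_j\}$ be a Bayesian model consisting of a parametric family of densities $f_j(\cdot\mid\theta_j)$ indexed by $\theta_j\in\mathbb{F}_j$ and a prior $\pi_j$ on $\mathbb{F}_j$, and define the Bayes factor $$B_{12}=\frac{\int_{\mathbb{F}_1}\prod_{i=1}^n f_1(x_i\mid\theta_1)\,\pi_1(d\theta_1)}{\int_{\mathbb{F}_2}\prod_{i=1}^n f_2(x_i\mid\theta_2)\,\pi_2(d\theta_2)}.$$ Suppose that: (i) $f_0$ is in the Kullback--Leibler support of $\pi_2$: for every $\epsilon>0$, $\pi_2[\theta_2: d_K\{f_0(\cdot),f_2(\cdot\mid\theta_2)\}<\epsilon]>0$; (ii) for every $c>0$, almost surely under $f_0$, for all sufficiently large $n$, $$\sup_{\theta_1\in\mathbb{F}_1}\prod_{i=1}^n\frac{f_1(x_i\mid\theta_1)}{f_0(x_i)}<e^{nc};$$ (iii) $\inf_{\theta_1\in\mathbb{F}_1} d_H\{f_1(\cdot\mid\theta_1),f_0(\cdot)\}>0$. Then $B_{12}\to 0$ almost surely under $f_0$ as $n\to\infty$.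
   Context: $d_K(f,g)=\int f\log(f/g)$ is the Kullback--Leibler divergence and $d_H(f,g)=\{\int(\sqrt f-\sqrt g)^2\}^{1/2}$ is the Hellinger distance. *)

theory Defs
  imports "HOL-Probability.Probability"
begin

text \<open>Kullback--Leibler divergence d_K(f,g) = integral of f log(f/g) w.r.t. the base measure mu,
  valued in the extended reals, with the conventions 0 log(0/g) = 0 and f log(f/0) = +infinity
  for f > 0. It is split into the positive and negative parts of the integrand.\<close>

definition kl_pos :: "('b \<Rightarrow> real) \<Rightarrow> ('b \<Rightarrow> real) \<Rightarrow> 'b \<Rightarrow> ennreal" where
  "kl_pos f g x = (if f x = 0 then 0 else if g x = 0 then \<infinity>
                   else ennreal (f x * ln (f x / g x)))"

definition kl_neg :: "('b \<Rightarrow> real) \<Rightarrow> ('b \<Rightarrow> real) \<Rightarrow> 'b \<Rightarrow> ennreal" where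
  "kl_neg f g x = ennreal (if f x > 0 \<and> g x > 0 then - (f x * ln (f x / g x)) else 0)"

definition kl_div :: "'b measure \<Rightarrow> ('b \<Rightarrow> real) \<Rightarrow> ('b \<Rightarrow> real) \<Rightarrow> ereal" where
  "kl_div \<mu> f g = enn2ereal (\<integral>\<^sup>+ x. kl_pos f g x \<partial>\<mu>) - enn2ereal (\<integral>\<^sup>+ x. kl_neg f g x \<partial>\<mu>)"

text \<open>Hellinger distance d_H(f,g) = (integral of (sqrt f - sqrt g)^2)^(1/2).
  (For probability densities the integral is at most 2, hence finite.)\<close>

definition hellinger_dist :: "'b measure \<Rightarrow> ('b \<Rightarrow> real) \<Rightarrow> ('b \<Rightarrow> real) \<Rightarrow> real" where
  "hellinger_dist \<mu> f g =
     sqrt (enn2real (\<integral>\<^sup>+ x. ennreal ((sqrt (f x) - sqrt (g x))\<^sup>2) \<partial>\<mu>))"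

definition marginal_lik :: "'p measure \<Rightarrow> ('p \<Rightarrow> 'b \<Rightarrow> real) \<Rightarrow> (nat \<Rightarrow> 'b) \<Rightarrow> nat \<Rightarrow> ennreal" where
  "marginal_lik P f x n = (\<integral>\<^sup>+ \<theta>. ennreal (\<Prod>i<n. f \<theta> (x i)) \<partial>P)"

definition bayes_factor ::
  "'p measure \<Rightarrow> ('p \<Rightarrow> 'b \<Rightarrow> real) \<Rightarrow> 'q measure \<Rightarrow> ('q \<Rightarrow> 'b \<Rightarrow> real)
     \<Rightarrow> (nat \<Rightarrow> 'b) \<Rightarrow> nat \<Rightarrow> ennreal" where
  "bayes_factor P1 f1 P2 f2 x n = marginal_lik P1 f1 x n / marginal_lik P2 f2 x n"

end

theory Submission
  imports Defs
begin


lemma geom_rem_bound: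
  fixes w :: real assumes w: "w \<ge> 0"
  shows "(\<Sum>m<M. (if w \<le> 2^m then w\<^sup>2 / 2^m else 0)) + (if w \<le> 2^M then 2 * w\<^sup>2 / 2^M else 2 * w) \<le> 2 * w"
proof (induction M)
  case 0
  then show ?case using w by (auto simp: power2_eq_square mult_left_le)
next
  case (Suc M)
  show ?case
  proof (cases "w \<le> 2^M")
    case True
    have "(2::real)^M \<le> 2^Suc M" by simp
    then have "w \<le> 2^Suc M" using True by linarith
    then show ?thesis using Suc True by (simp add: field_simps)
  next
    case False
    then have "2^M < w" by simp
    have "(if w \<le> 2 ^ Suc M then 2 * w\<^sup>2 / 2 ^ Suc M else 2 * w) \<le> 2 * w"
    proof (cases "w \<le> 2 ^ Suc M")
      case True
      have "w\<^sup>2 / 2^M = w * (w / 2^M)" by (simp add: power2_eq_square)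
      also have "\<dots> \<le> w * 2" using True w by (intro mult_left_mono) (auto simp: field_simps)
      finally show ?thesis using True by simp
    qed simp
    then show ?thesis using Suc False by simp
  qed
qed

lemma geom_bound:
  fixes w :: real assumes w: "w \<ge> 0"
  shows "(\<Sum>m<M. (if w \<le> 2^m then w\<^sup>2 / 2^m else 0)) \<le> 2 * w"
proof -
  have "0 \<le> (if w \<le> 2^M then 2 * w\<^sup>2 / 2^M else 2 * w)" using w by simp
  then show ?thesis using geom_rem_bound[OF w, of M] by linarith
qed

lemma count_bound:
  fixes w :: real assumes w: "w \<ge> 0"
  shows "(\<Sum>i<K. (if real i + 1 < w then 1 else 0::real)) \<le> min (real K) w"
proof (induction K)
  case 0 then show ?case using w by simp
next
  case (Suc K) then show ?case by (auto simp: min_def split: if_splits)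
qed


lemma sq_le_of_abs_le: fixes a C :: real assumes "\<bar>a\<bar> \<le> C" shows "a * a \<le> C * C"
proof -
  have "\<bar>a\<bar> * \<bar>a\<bar> \<le> C * C" by (rule mult_mono) (use assms in auto)
  then show ?thesis by (simp add: abs_mult[symmetric])
qed

lemma (in prob_space) variance_sum_indep_le:
  fixes Y :: "'i \<Rightarrow> 'a \<Rightarrow> real"
  assumes fin: "finite I" and ind: "indep_vars (\<lambda>_. borel) Y I"
    and bnd: "\<And>i x. i \<in> I \<Longrightarrow> x \<in> space M \<Longrightarrow> \<bar>Y i x\<bar> \<le> C"
  shows "variance (\<lambda>x. \<Sum>i\<in>I. Y i x) \<le> (\<Sum>i\<in>I. expectation (\<lambda>x. (Y i x)\<^sup>2))"
proof -
  have meas[measurable]: "\<And>i. i \<in> I \<Longrightarrow> Y i \<in> borel_measurable M"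
    using ind unfolding indep_vars_def by blast
  have C: "C \<ge> 0" if ne: "I \<noteq> {}" 
  proof -
    obtain i where "i \<in> I" using ne by auto
    obtain x where "x \<in> space M" using not_empty by auto
    then show ?thesis using bnd[OF \<open>i\<in>I\<close> \<open>x \<in> space M\<close>] by linarith
  qed
  have intY: "integrable M (Y i)" if "i \<in> I" for i
    by (rule integrable_const_bound[where B=C]) (use that bnd in auto)
  define m where "m i = expectation (Y i)" for i
  define D where "D i x = Y i x - m i" for i x
  have measD[measurable]: "\<And>i. i \<in> I \<Longrightarrow> D i \<in> borel_measurable M"
    unfolding D_def by measurable
  have intD: "integrable M (D i)" if "i \<in> I" for i
  proof -
    have "integrable M (\<lambda>x. Y i x - m i)" using intY[OF that] by simp
    moreover have "(\<lambda>x. Y i x - m i) = D i" by (rule ext) (simp add: D_def)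
    ultimately show ?thesis by simp
  qed
  have bD: "\<bar>D i x\<bar> \<le> 2 * C" if "i \<in> I" "x \<in> space M" for i x
  proof -
    have "\<bar>m i\<bar> \<le> expectation (\<lambda>x. \<bar>Y i x\<bar>)" unfolding m_def by (rule integral_abs_bound)
    also have "\<dots> \<le> expectation (\<lambda>x. C)"
      by (rule integral_mono) (use intY[OF that(1)] bnd[OF that(1)] in auto)
    finally have "\<bar>m i\<bar> \<le> C" by (simp add: prob_space)
    then show ?thesis using bnd[OF that] unfolding D_def by linarith
  qed
  have intDD: "integrable M (\<lambda>x. D i x * D j x)" if "i \<in> I" "j \<in> I" for i j
  proof (rule integrable_const_bound[where B="2*C*(2*C)"])
    show "AE x in M. norm (D i x * D j x) \<le> 2 * C * (2 * C)"
    proof (intro AE_I2)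
      fix x assume x: "x \<in> space M"
      have a: "\<bar>D i x\<bar> \<le> 2*C" "\<bar>D j x\<bar> \<le> 2*C" using bD that x by auto
      have "\<bar>D i x\<bar> * \<bar>D j x\<bar> \<le> 2*C * (2*C)"
        by (rule mult_mono[OF a]) (use a in auto)
      then show "norm (D i x * D j x) \<le> 2 * C * (2 * C)" by (simp add: abs_mult)
    qed
  qed (use that in measurable)
  have ES: "expectation (\<lambda>x. \<Sum>i\<in>I. Y i x) = (\<Sum>i\<in>I. m i)"
    unfolding m_def using intY by (simp add: integral_sum)
  have eq: "(\<lambda>x. ((\<Sum>i\<in>I. Y i x) - expectation (\<lambda>x. \<Sum>i\<in>I. Y i x))\<^sup>2) = 
        (\<lambda>x. \<Sum>i\<in>I. \<Sum>j\<in>I. D i x * D j x)"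
    by (rule ext) (simp only: ES D_def sum_subtractf[symmetric] power2_eq_square sum_product)
  have off: "expectation (\<lambda>x. D i x * D j x) = 0" if "i \<in> I" "j \<in> I" "i \<noteq> j" for i j
  proof -
    have ind2: "indep_vars (\<lambda>_. borel) D {i, j}"
      unfolding D_def
      by (rule indep_vars_compose2[OF indep_vars_subset[OF ind], where Y="\<lambda>i v. v - m i"])
         (use that in auto)
    have "expectation (\<lambda>x. \<Prod>k\<in>{i,j}. D k x) = (\<Prod>k\<in>{i,j}. expectation (D k))"
      by (rule indep_vars_lebesgue_integral[OF _ ind2])
         (use that intD in auto)
    moreover have "expectation (D i) = 0"
      using intY[OF that(1)] unfolding D_def m_def by (simp add: prob_space)
    ultimately show ?thesis using that by simp
  qed
  have "variance (\<lambda>x. \<Sum>i\<in>I. Y i x) = (\<Sum>i\<in>I. \<Sum>j\<in>I. expectation (\<lambda>x. D i x * D j x))"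
    unfolding eq using intDD by (simp add: integral_sum integrable_sum)
  also have "\<dots> = (\<Sum>i\<in>I. expectation (\<lambda>x. D i x * D i x))"
  proof (rule sum.cong[OF refl])
    fix i assume i: "i \<in> I"
    have "(\<Sum>j\<in>I. expectation (\<lambda>x. D i x * D j x)) = expectation (\<lambda>x. D i x * D i x) + 
            (\<Sum>j\<in>I - {i}. expectation (\<lambda>x. D i x * D j x))"
      using fin i by (simp add: sum.remove)
    also have "(\<Sum>j\<in>I - {i}. expectation (\<lambda>x. D i x * D j x)) = 0"
      using off i by (intro sum.neutral) auto
    finally show "(\<Sum>j\<in>I. expectation (\<lambda>x. D i x * D j x)) = expectation (\<lambda>x. D i x * D i x)" by simp
  qed
  also have "\<dots> \<le> (\<Sum>i\<in>I. expectation (\<lambda>x. (Y i x)\<^sup>2))"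
  proof (rule sum_mono)
    fix i assume i: "i \<in> I"
    have intY2: "integrable M (\<lambda>x. (Y i x)\<^sup>2)"
      by (rule integrable_const_bound[where B="C*C"]) 
         (use i bnd in \<open>auto simp: power2_eq_square intro!: AE_I2 sq_le_of_abs_le\<close>)
    have "expectation (\<lambda>x. D i x * D i x) = expectation (\<lambda>x. (Y i x)\<^sup>2 - 2 * m i * Y i x + (m i)\<^sup>2)"
      by (simp add: D_def power2_eq_square algebra_simps)
    also have "\<dots> = expectation (\<lambda>x. (Y i x)\<^sup>2) - 2 * m i * m i + (m i)\<^sup>2"
      using intY[OF i] intY2 by (simp add: m_def prob_space)
    also have "\<dots> \<le> expectation (\<lambda>x. (Y i x)\<^sup>2)" by (simp add: power2_eq_square)
    finally show "expectation (\<lambda>x. D i x * D i x) \<le> expectation (\<lambda>x. (Y i x)\<^sup>2)" .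
  qed
  finally show ?thesis .
qed

lemma (in prob_space) iid_integral:
  assumes "distr M borel (W i) = distr M borel (W 0)" "W i \<in> borel_measurable M" "W 0 \<in> borel_measurable M"
    "(g::real\<Rightarrow>real) \<in> borel_measurable borel"
  shows "expectation (\<lambda>x. g (W i x)) = expectation (\<lambda>x. g (W 0 x))"
  by (metis assms integral_distr)

lemma (in prob_space) iid_integrable:
  assumes "distr M borel (W i) = distr M borel (W 0)" "W i \<in> borel_measurable M" "W 0 \<in> borel_measurable M"
    "(g::real\<Rightarrow>real) \<in> borel_measurable borel"
  shows "integrable M (\<lambda>x. g (W i x)) \<longleftrightarrow> integrable M (\<lambda>x. g (W 0 x))"
  by (metis assms integrable_distr_eq)

lemma (in prob_space) bounded_integrable:
  fixes f :: "'a \<Rightarrow> real"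
  assumes "f \<in> borel_measurable M" "\<And>x. x \<in> space M \<Longrightarrow> \<bar>f x\<bar> \<le> B"
  shows "integrable M f"
  by (rule integrable_const_bound[where B=B]) (use assms in auto)

lemma (in prob_space) heavy_block:
  fixes W :: "nat \<Rightarrow> 'a \<Rightarrow> real"
  assumes ind: "indep_vars (\<lambda>_. borel) W UNIV"
    and iid: "\<And>i. distr M borel (W i) = distr M borel (W 0)"
    and nn: "\<And>i x. x \<in> space M \<Longrightarrow> W i x \<ge> 0"
    and int: "integrable M (W 0)"
    and t: "t > 0"
  shows "prob {x \<in> space M. real ((2::nat)^m) * (expectation (W 0) + t) \<le> 
             (\<Sum>i<(2::nat)^m. (if W i x \<le> real i + 1 then W i x else 0))}
       \<le> expectation (\<lambda>x. (if W 0 x \<le> 2^m then (W 0 x)\<^sup>2 / 2^m else 0)) / t\<^sup>2"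
proof -
  have meas[measurable]: "\<And>i. W i \<in> borel_measurable M" using ind unfolding indep_vars_def by blast
  define \<mu> where "\<mu> = expectation (W 0)"
  have ex: "expectation (\<lambda>x. g (W i x)) = expectation (\<lambda>x. g (W 0 x))" 
    if "g \<in> borel_measurable borel" for g :: "real \<Rightarrow> real" and i
    using iid_integral[OF iid[of i] meas[of i] meas[of 0] that] .
  define N where "N = (2::nat)^m"
  have rN: "real N = 2^m" unfolding N_def by simp
  have N: "real N \<ge> 1" unfolding rN by simp
  define k where "k i v = (if v \<le> real i + 1 then v else 0)" for i and v :: real
  define T where "T i x = k i (W i x)" for i x
  define H where "H x = (if W 0 x \<le> 2^m then (W 0 x)\<^sup>2 / 2^m else 0)" for x
  define S where "S x = (\<Sum>i<N. T i x)" for x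
  have meask[measurable]: "k i \<in> borel_measurable borel" for i unfolding k_def by measurable
  have measT[measurable]: "T i \<in> borel_measurable M" for i unfolding T_def by measurable
  have measH[measurable]: "H \<in> borel_measurable M" unfolding H_def by measurable
  have measS[measurable]: "S \<in> borel_measurable M" unfolding S_def by measurable
  have bT: "\<bar>T i x\<bar> \<le> real N" if "i < N" "x \<in> space M" for i x
  proof -
    have "real i + 1 \<le> real N" using that by linarith
    then show ?thesis using nn[OF that(2), of i] unfolding T_def k_def by auto
  qed
  have Tnn: "T i x \<ge> 0" if "x \<in> space M" for i x using nn[OF that, of i] unfolding T_def k_def by auto
  have intT: "integrable M (T i)" if "i < N" for i
    by (rule bounded_integrable[OF measT bT[OF that]])
  have indT: "indep_vars (\<lambda>_. borel) T {..<N}"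
    unfolding T_def by (rule indep_vars_compose2[OF indep_vars_subset[OF ind]]) auto
  have ET: "expectation (T i) \<le> \<mu>" for i
  proof -
    have "expectation (T i) = expectation (\<lambda>x. k i (W 0 x))" unfolding T_def by (rule ex) simp
    also have "\<dots> \<le> \<mu>" unfolding \<mu>_def
    proof (rule integral_mono[OF _ int])
      show "integrable M (\<lambda>x. k i (W 0 x))"
        by (rule bounded_integrable[where B="real i + 1"]) (use nn in \<open>auto simp: k_def\<close>)
      show "k i (W 0 x) \<le> W 0 x" if "x \<in> space M" for x using nn[OF that, of 0] by (auto simp: k_def)
    qed
    finally show ?thesis .
  qed
  have intH: "integrable M H"
  proof (rule bounded_integrable[OF measH])
    fix x assume x: "x \<in> space M"
    show "\<bar>H x\<bar> \<le> 2^m"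
    proof (cases "W 0 x \<le> 2^m")
      case True
      have "(W 0 x)\<^sup>2 / 2^m = W 0 x * (W 0 x / 2^m)" by (simp add: power2_eq_square)
      also have "\<dots> \<le> W 0 x * 1" using True nn[OF x, of 0] by (intro mult_left_mono) auto
      finally show ?thesis using True nn[OF x, of 0] unfolding H_def by auto
    qed (simp add: H_def)
  qed
  have ET2: "expectation (\<lambda>x. (T i x)\<^sup>2) \<le> real N * expectation H" if "i < N" for i
  proof -
    have "expectation (\<lambda>x. (T i x)\<^sup>2) = expectation (\<lambda>x. (k i (W 0 x))\<^sup>2)" unfolding T_def
      by (rule ex[of "\<lambda>v. (k i v)\<^sup>2" i]) simp
    also have "\<dots> \<le> expectation (\<lambda>x. real N * H x)"
    proof (rule integral_mono)
      show "integrable M (\<lambda>x. (k i (W 0 x))\<^sup>2)"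
        by (rule bounded_integrable[where B="(real i + 1)^2"]) 
           (use nn in \<open>auto simp: k_def intro!: power_mono\<close>)
      show "integrable M (\<lambda>x. real N * H x)" using intH by simp
      fix x assume x: "x \<in> space M"
      have "real i + 1 \<le> real N" using that by linarith
      then show "(k i (W 0 x))\<^sup>2 \<le> real N * H x"
        using nn[OF x, of 0] unfolding k_def H_def rN by auto
    qed
    also have "\<dots> = real N * expectation H" by simp
    finally show ?thesis .
  qed
  have ES: "expectation S \<le> real N * \<mu>"
  proof -
    have "expectation S = (\<Sum>i<N. expectation (T i))"
      unfolding S_def[abs_def] using intT by (simp add: integral_sum)
    also have "\<dots> \<le> (\<Sum>i<N. \<mu>)" by (rule sum_mono) (rule ET)
    finally show ?thesis by simp
  qed
  have var: "variance S \<le> real N * (real N * expectation H)"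
  proof -
    have "variance S \<le> (\<Sum>i<N. expectation (\<lambda>x. (T i x)\<^sup>2))"
      unfolding S_def[abs_def] by (rule variance_sum_indep_le[OF _ indT]) (use bT in auto)
    also have "\<dots> \<le> (\<Sum>i<N. real N * expectation H)" by (rule sum_mono) (use ET2 in auto)
    finally show ?thesis by simp
  qed
  have Nt: "real N * t > 0" using N t by simp
  have cheb: "prob {x\<in>space M. \<bar>S x - expectation S\<bar> \<ge> real N * t} \<le> variance S / (real N * t)\<^sup>2"
  proof (rule Chebyshev_inequality[OF measS _ Nt])
    show "integrable M (\<lambda>x. (S x)\<^sup>2)"
    proof (rule bounded_integrable[where B="(real N * real N)^2"])
      fix x assume x: "x \<in> space M"
      have "\<bar>S x\<bar> \<le> (\<Sum>i<N. real N)" unfolding S_def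
        by (rule order.trans[OF sum_abs sum_mono]) (use bT x in auto)
      then have "\<bar>S x\<bar> \<le> real N * real N" by simp
      then show "\<bar>(S x)\<^sup>2\<bar> \<le> (real N * real N)\<^sup>2"
        by (simp add: power2_eq_square sq_le_of_abs_le)
    qed simp
  qed
  have sub: "{x \<in> space M. real N * (\<mu> + t) \<le> S x} \<subseteq> {x\<in>space M. \<bar>S x - expectation S\<bar> \<ge> real N * t}"
    using ES by (auto simp: algebra_simps)
  have "prob {x \<in> space M. real N * (\<mu> + t) \<le> S x} \<le> variance S / (real N * t)\<^sup>2"
    by (rule order.trans[OF finite_measure_mono[OF sub] cheb]) measurable
  also have "\<dots> \<le> real N * (real N * expectation H) / (real N * t)\<^sup>2"
    using var Nt by (intro divide_right_mono) auto
  also have "\<dots> = expectation H / t\<^sup>2" using N t by (simp add: power2_eq_square field_simps)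
  finally show ?thesis unfolding S_def T_def k_def H_def \<mu>_def N_def .
qed

lemma (in prob_space) heavy_upper:
  fixes W :: "nat \<Rightarrow> 'a \<Rightarrow> real"
  assumes ind: "indep_vars (\<lambda>_. borel) W UNIV"
    and iid: "\<And>i. distr M borel (W i) = distr M borel (W 0)"
    and nn: "\<And>i x. x \<in> space M \<Longrightarrow> W i x \<ge> 0"
    and int: "integrable M (W 0)"
    and t: "t > 0"
  shows "AE x in M. eventually (\<lambda>n. (\<Sum>i<n. W i x) \<le> real n * (2 * expectation (W 0) + 3 * t)) sequentially"
proof -
  have meas[measurable]: "\<And>i. W i \<in> borel_measurable M" using ind unfolding indep_vars_def by blast
  define \<mu> where "\<mu> = expectation (W 0)"
  have ex: "expectation (\<lambda>x. g (W i x)) = expectation (\<lambda>x. g (W 0 x))" 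
    if "g \<in> borel_measurable borel" for g :: "real \<Rightarrow> real" and i
    using iid_integral[OF iid[of i] meas[of i] meas[of 0] that] .
  have \<mu>0: "\<mu> \<ge> 0" unfolding \<mu>_def using nn by (intro integral_nonneg_AE AE_I2) auto
  define A where "A i = {x \<in> space M. real i + 1 < W i x}" for i
  have A_sets[measurable]: "A i \<in> sets M" for i unfolding A_def by measurable
  define g where "g i v = (if real i + 1 < v then 1 else 0::real)" for i and v :: real
  have measg[measurable]: "g i \<in> borel_measurable borel" for i unfolding g_def by measurable
  have intg: "integrable M (\<lambda>x. g i (W 0 x))" for i
    by (rule bounded_integrable[where B=1]) (auto simp: g_def)
  have probA: "prob (A i) = expectation (\<lambda>x. g i (W 0 x))" for i
  proof -
    have "prob (A i) = expectation (indicator (A i))"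
      using sets.sets_into_space[OF A_sets[of i]] by (simp add: Int_absorb2)
    also have "\<dots> = expectation (\<lambda>x. g i (W i x))"
      by (rule Bochner_Integration.integral_cong) (auto simp: A_def g_def indicator_def)
    also have "\<dots> = expectation (\<lambda>x. g i (W 0 x))" by (rule ex) simp
    finally show ?thesis .
  qed
  have sumA: "summable (\<lambda>i. prob (A i))"
  proof (rule summableI_nonneg_bounded[where x=\<mu>])
    fix n
    have "(\<Sum>i<n. prob (A i)) = expectation (\<lambda>x. \<Sum>i<n. g i (W 0 x))"
      using intg by (simp add: probA integral_sum)
    also have "\<dots> \<le> \<mu>" unfolding \<mu>_def
    proof (rule integral_mono[OF _ int])
      show "integrable M (\<lambda>x. \<Sum>i<n. g i (W 0 x))" using intg by simp
      fix x assume x: "x \<in> space M"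
      show "(\<Sum>i<n. g i (W 0 x)) \<le> W 0 x"
        using count_bound[OF nn[OF x, of 0], of n] unfolding g_def by linarith
    qed
    finally show "(\<Sum>i<n. prob (A i)) \<le> \<mu>" .
  qed simp
  have AE1: "AE x in M. eventually (\<lambda>i. W i x \<le> real i + 1) sequentially"
  proof -
    have "AE x in M. eventually (\<lambda>i. x \<in> space M - A i) sequentially"
      by (rule borel_cantelli_AE1[OF A_sets _ sumA]) (simp add: emeasure_eq_measure)
    then show ?thesis
      by eventually_elim (auto elim: eventually_mono simp: A_def)
  qed
  define T where "T i x = (if W i x \<le> real i + 1 then W i x else 0)" for i x
  define H where "H m x = (if W 0 x \<le> 2^m then (W 0 x)\<^sup>2 / 2^m else 0)" for m x
  define B where "B m = {x \<in> space M. real ((2::nat)^m) * (\<mu> + t) \<le> (\<Sum>i<(2::nat)^m. T i x)}" for m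
  have B_sets[measurable]: "B m \<in> sets M" for m unfolding B_def T_def by measurable
  have measH[measurable]: "H m \<in> borel_measurable M" for m unfolding H_def by measurable
  have probB: "prob (B m) \<le> expectation (H m) / t\<^sup>2" for m
    using heavy_block[OF ind iid nn int t, of m] unfolding B_def T_def H_def \<mu>_def .
  have intH: "integrable M (H m)" for m
  proof (rule bounded_integrable[OF measH])
    fix x assume x: "x \<in> space M"
    show "\<bar>H m x\<bar> \<le> 2^m"
    proof (cases "W 0 x \<le> 2^m")
      case True
      have "(W 0 x)\<^sup>2 / 2^m = W 0 x * (W 0 x / 2^m)" by (simp add: power2_eq_square)
      also have "\<dots> \<le> W 0 x * 1" using True nn[OF x, of 0] by (intro mult_left_mono) auto
      finally show ?thesis using True nn[OF x, of 0] unfolding H_def by auto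
    qed (simp add: H_def)
  qed
  have sumB: "summable (\<lambda>m. prob (B m))"
  proof (rule summableI_nonneg_bounded[where x="2 * \<mu> / t\<^sup>2"])
    fix n
    have "(\<Sum>m<n. prob (B m)) \<le> (\<Sum>m<n. expectation (H m) / t\<^sup>2)" by (rule sum_mono) (rule probB)
    also have "\<dots> = expectation (\<lambda>x. \<Sum>m<n. H m x) / t\<^sup>2"
      using intH by (simp add: integral_sum sum_divide_distrib)
    also have "expectation (\<lambda>x. \<Sum>m<n. H m x) \<le> 2 * \<mu>" unfolding \<mu>_def
    proof -
      have "expectation (\<lambda>x. \<Sum>m<n. H m x) \<le> expectation (\<lambda>x. 2 * W 0 x)"
      proof (rule integral_mono)
        show "integrable M (\<lambda>x. \<Sum>m<n. H m x)" using intH by simp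
        show "integrable M (\<lambda>x. 2 * W 0 x)" using int by simp
        fix x assume x: "x \<in> space M"
        show "(\<Sum>m<n. H m x) \<le> 2 * W 0 x"
          using geom_bound[OF nn[OF x, of 0], of n] unfolding H_def .
      qed
      then show "expectation (\<lambda>x. \<Sum>m<n. H m x) \<le> 2 * expectation (W 0)" by simp
    qed
    then have "expectation (\<lambda>x. \<Sum>m<n. H m x) / t\<^sup>2 \<le> 2 * \<mu> / t\<^sup>2"
      by (simp add: divide_right_mono)
    finally show "(\<Sum>m<n. prob (B m)) \<le> 2 * \<mu> / t\<^sup>2" .
  qed simp
  have AE2: "AE x in M. eventually (\<lambda>m. (\<Sum>i<(2::nat)^m. T i x) < real ((2::nat)^m) * (\<mu> + t)) sequentially"
  proof -
    have "AE x in M. eventually (\<lambda>m. x \<in> space M - B m) sequentially"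
      by (rule borel_cantelli_AE1[OF B_sets _ sumB]) (simp add: emeasure_eq_measure)
    then show ?thesis
      by eventually_elim (auto elim: eventually_mono simp: B_def)
  qed
  show ?thesis
    using AE1 AE2 AE_space
  proof eventually_elim
    case (elim x)
    from elim(1) obtain i0 where i0: "\<And>i. i \<ge> i0 \<Longrightarrow> W i x \<le> real i + 1"
      unfolding eventually_sequentially by blast
    from elim(2) obtain m0 where m0: "\<And>m. m \<ge> m0 \<Longrightarrow> (\<Sum>i<(2::nat)^m. T i x) < real ((2::nat)^m) * (\<mu> + t)"
      unfolding eventually_sequentially by blast
    have x: "x \<in> space M" by fact
    define C where "C = (\<Sum>i<i0. W i x)"
    obtain K :: nat where K: "C / t \<le> real K" using real_arch_simple by blast
    have Tnn: "T i x \<ge> 0" for i using nn[OF x, of i] by (simp add: T_def)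
    show ?case unfolding eventually_sequentially
    proof (intro exI[of _ "max (max K 1) (2^m0)"] allI impI)
      fix n assume n: "max (max K 1) (2^m0) \<le> n"
      obtain m where m: "2^m \<le> n" "n < 2^(m+1)"
        using ex_power_ivl1[of 2 n] n by auto
      have "m0 < m + 1"
      proof (rule ccontr)
        assume "\<not> m0 < m + 1"
        then have "(2::nat)^(m+1) \<le> 2^m0" by (intro power_increasing) auto
        then show False using m n by linarith
      qed
      then have mm0: "m + 1 \<ge> m0" by simp
      have W_le: "W i x \<le> (if i < i0 then W i x else 0) + T i x" for i
        using i0[of i] Tnn[of i] by (auto simp: T_def)
      have "(\<Sum>i<n. W i x) \<le> (\<Sum>i<n. (if i < i0 then W i x else 0)) + (\<Sum>i<n. T i x)"
        by (simp add: sum.distrib[symmetric] sum_mono W_le)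
      also have "(\<Sum>i<n. (if i < i0 then W i x else 0)) \<le> C"
      proof -
        have "(\<Sum>i<n. (if i < i0 then W i x else 0)) \<le> (\<Sum>i<n + i0. (if i < i0 then W i x else 0))"
          by (rule sum_mono2) (use nn[OF x] in auto)
        also have "\<dots> = (\<Sum>i\<in>{..<n+i0} \<inter> {i. i < i0}. W i x)"
          by (subst sum.If_cases) auto
        also have "{..<n+i0} \<inter> {i. i < i0} = {..<i0}" by auto
        finally show ?thesis unfolding C_def .
      qed
      also have "(\<Sum>i<n. T i x) \<le> (\<Sum>i<(2::nat)^(m+1). T i x)"
        by (rule sum_mono2) (use m Tnn in auto)
      also have "\<dots> \<le> real ((2::nat)^(m+1)) * (\<mu> + t)" using m0[OF mm0] by simp
      also have "\<dots> \<le> 2 * real n * (\<mu> + t)"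
      proof -
        have "real ((2::nat)^(m+1)) \<le> 2 * real n" using m(1) by simp
        then show ?thesis using \<mu>0 t by (intro mult_right_mono) auto
      qed
      also have "C \<le> real n * t"
      proof -
        have "C \<le> real K * t" using K t by (simp add: field_simps)
        also have "\<dots> \<le> real n * t" using n t by (intro mult_right_mono) auto
        finally show ?thesis .
      qed
      finally show "(\<Sum>i<n. W i x) \<le> real n * (2 * expectation (W 0) + 3 * t)"
        unfolding \<mu>_def by (simp add: algebra_simps)
    qed
  qed
qed

lemma (in prob_space) hoeffding_eventually:
  fixes Z :: "nat \<Rightarrow> 'a \<Rightarrow> real"
  assumes ind: "indep_vars (\<lambda>_. borel) Z UNIV"
    and bnd: "\<And>i x. x \<in> space M \<Longrightarrow> \<bar>Z i x\<bar> \<le> K" and K: "K > 0"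
    and mean: "\<And>i. expectation (Z i) = expectation (Z 0)"
    and e: "\<epsilon> > 0"
  shows "AE x in M. eventually (\<lambda>n. (\<Sum>i<n. Z i x) \<le> real n * (expectation (Z 0) + \<epsilon>)) sequentially"
proof -
  have meas[measurable]: "\<And>i. Z i \<in> borel_measurable M" using ind unfolding indep_vars_def by blast
  define c where "c = \<epsilon>\<^sup>2 / (2 * K\<^sup>2)"
  have c: "c > 0" unfolding c_def using e K by simp
  define E where "E n = {x\<in>space M. (\<Sum>i<n. Z i x) \<ge> (\<Sum>i<n. expectation (Z i)) + real n * \<epsilon>}" for n
  have E_sets[measurable]: "E n \<in> sets M" for n unfolding E_def by measurable
  have probE: "prob (E n) \<le> exp (- c) ^ n" for n
  proof (cases "n = 0")
    case True then show ?thesis by simp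
  next
    case False
    interpret H: Hoeffding_ineq M "{..<n}" Z "\<lambda>_. -K" "\<lambda>_. K" "\<Sum>i<n. expectation (Z i)"
    proof unfold_locales
      show "finite {..<n}" by simp
      show "indep_vars (\<lambda>_. borel) Z {..<n}" by (rule indep_vars_subset[OF ind]) simp
      fix i assume "i \<in> {..<n}"
      show "AE x in M. Z i x \<in> {-K..K}"
      proof (intro AE_I2)
        fix x assume "x \<in> space M"
        then have h: "\<bar>Z i x\<bar> \<le> K" by (rule bnd)
        then show "Z i x \<in> {-K..K}" by (auto simp: abs_le_iff)
      qed
    qed
    have pos: "(\<Sum>i<n. (K - - K)\<^sup>2) > 0" using False K by simp
    have "prob (E n) \<le> exp (-2 * (real n * \<epsilon>)\<^sup>2 / (\<Sum>i<n. (K - - K)\<^sup>2))"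
      unfolding E_def by (rule H.Hoeffding_ineq_ge) (use e pos in auto)
    also have "-2 * (real n * \<epsilon>)\<^sup>2 / (\<Sum>i<n. (K - - K)\<^sup>2) = - c * real n"
      using False K unfolding c_def by (simp add: power2_eq_square field_simps)
    also have "exp (- c * real n) = exp (- c) ^ n" by (simp add: exp_of_nat_mult[symmetric] mult.commute)
    finally show ?thesis .
  qed
  have sumE: "summable (\<lambda>n. prob (E n))"
  proof (rule summable_comparison_test[OF _ summable_geometric[of "exp (-c)"]])
    show "norm (exp (-c)) < 1" using c by simp
    show "\<exists>N. \<forall>n\<ge>N. norm (prob (E n)) \<le> exp (- c) ^ n" using probE by simp
  qed
  have sm: "(\<Sum>i<n. expectation (Z i)) = real n * expectation (Z 0)" for n
  proof -
    have "(\<Sum>i<n. expectation (Z i)) = (\<Sum>i<n. expectation (Z 0))" by (rule sum.cong[OF refl]) (rule mean)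
    then show ?thesis by simp
  qed
  have "AE x in M. eventually (\<lambda>n. x \<in> space M - E n) sequentially"
    by (rule borel_cantelli_AE1[OF E_sets _ sumE]) (simp add: emeasure_eq_measure)
  then show ?thesis
  proof eventually_elim
    case (elim x)
    then show ?case 
    proof (rule eventually_mono)
      fix n assume "x \<in> space M - E n"
      then have "\<not> (\<Sum>i<n. Z i x) \<ge> real n * expectation (Z 0) + real n * \<epsilon>" 
        unfolding E_def sm by auto
      then show "(\<Sum>i<n. Z i x) \<le> real n * (expectation (Z 0) + \<epsilon>)" by (simp add: ring_distribs)
    qed
  qed
qed

lemma (in prob_space) slln_upper:
  fixes Y :: "nat \<Rightarrow> 'a \<Rightarrow> real"
  assumes ind: "indep_vars (\<lambda>_. borel) Y UNIV"
    and iid: "\<And>i. distr M borel (Y i) = distr M borel (Y 0)"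
    and int: "integrable M (Y 0)" and \<delta>: "\<delta> > 0"
  shows "AE x in M. eventually (\<lambda>n. (\<Sum>i<n. Y i x) \<le> real n * (expectation (Y 0) + \<delta>)) sequentially"
proof -
  have meas[measurable]: "\<And>i. Y i \<in> borel_measurable M" using ind unfolding indep_vars_def by blast
  define \<eta> where "\<eta> = \<delta> / 7"
  have \<eta>: "\<eta> > 0" using \<delta> by (simp add: \<eta>_def)
  define r where "r k x = max 0 (\<bar>Y 0 x\<bar> - real k)" for k x
  have measr[measurable]: "r k \<in> borel_measurable M" for k unfolding r_def by measurable
  have intr: "integrable M (r k)" for k
    by (rule Bochner_Integration.integrable_bound[OF integrable_abs[OF int]]) (auto simp: r_def)
  have "(\<lambda>k. expectation (r k)) \<longlonglongrightarrow> expectation (\<lambda>x. 0)"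
  proof (rule integral_dominated_convergence[where w="\<lambda>x. \<bar>Y 0 x\<bar>"])
    show "integrable M (\<lambda>x. \<bar>Y 0 x\<bar>)" using int by simp
    show "AE x in M. (\<lambda>k. r k x) \<longlonglongrightarrow> 0"
    proof (intro AE_I2)
      fix x
      obtain N :: nat where "\<bar>Y 0 x\<bar> \<le> real N" using real_arch_simple by blast
      then have "eventually (\<lambda>k. r k x = 0) sequentially"
        unfolding eventually_sequentially r_def by (intro exI[of _ N]) auto
      then show "(\<lambda>k. r k x) \<longlonglongrightarrow> 0" by (rule tendsto_eventually)
    qed
    show "AE x in M. norm (r k x) \<le> \<bar>Y 0 x\<bar>" for k by (intro AE_I2) (auto simp: r_def)
  qed auto
  then have "eventually (\<lambda>k. expectation (r k) < \<eta>) sequentially"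
    using \<eta> by (simp add: order_tendstoD(2))
  then obtain k where k: "expectation (r k) < \<eta>" unfolding eventually_sequentially by auto
  define K where "K = real k + 1"
  have K: "K > 0" unfolding K_def by simp
  define Z where "Z i x = max (-K) (min (Y i x) K)" for i x
  define W where "W i x = max 0 (Y i x - K)" for i x
  have measZ[measurable]: "Z i \<in> borel_measurable M" for i unfolding Z_def by measurable
  have measW[measurable]: "W i \<in> borel_measurable M" for i unfolding W_def by measurable
  have indZ: "indep_vars (\<lambda>_. borel) Z UNIV"
    unfolding Z_def[abs_def] by (rule indep_vars_compose2[OF ind]) auto
  have indW: "indep_vars (\<lambda>_. borel) W UNIV"
    unfolding W_def[abs_def] by (rule indep_vars_compose2[OF ind]) auto
  have iidW: "distr M borel (W i) = distr M borel (W 0)" for i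
  proof -
    have g: "(\<lambda>v::real. max 0 (v - K)) \<in> borel_measurable borel" by measurable
    have "distr M borel (W i) = distr (distr M borel (Y i)) borel (\<lambda>v. max 0 (v - K))"
      by (subst distr_distr[OF g meas]) (simp add: W_def[abs_def] comp_def)
    also have "\<dots> = distr (distr M borel (Y 0)) borel (\<lambda>v. max 0 (v - K))" by (simp add: iid[of i])
    also have "\<dots> = distr M borel (W 0)"
      by (subst distr_distr[OF g meas]) (simp add: W_def[abs_def] comp_def)
    finally show ?thesis .
  qed
  have meanZ: "expectation (Z i) = expectation (Z 0)" for i
  proof -
    have g: "(\<lambda>v::real. max (-K) (min v K)) \<in> borel_measurable borel" by measurable
    show ?thesis using iid_integral[OF iid[of i] meas[of i] meas[of 0] g] by (simp add: Z_def[abs_def])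
  qed
  have bZ: "\<bar>Z i x\<bar> \<le> K" for i x using K by (auto simp: Z_def)
  have Wnn: "W i x \<ge> 0" for i x by (simp add: W_def)
  have intW: "integrable M (W 0)"
    by (rule Bochner_Integration.integrable_bound[OF int]) (use K in \<open>auto simp: W_def intro!: AE_I2\<close>)
  have intZ: "integrable M (Z 0)" by (rule bounded_integrable[OF measZ bZ])
  have EW: "expectation (W 0) \<le> \<eta>"
  proof -
    have "expectation (W 0) \<le> expectation (r k)"
      by (rule integral_mono[OF intW intr]) (auto simp: W_def r_def K_def)
    then show ?thesis using k by simp
  qed
  have EZ: "expectation (Z 0) \<le> expectation (Y 0) + \<eta>"
  proof -
    have "expectation (Z 0) \<le> expectation (\<lambda>x. Y 0 x + r k x)"
      by (rule integral_mono[OF intZ]) (use int intr in \<open>auto simp: Z_def r_def K_def\<close>)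
    also have "\<dots> = expectation (Y 0) + expectation (r k)" using int intr by simp
    finally show ?thesis using k by simp
  qed
  have AEZ: "AE x in M. eventually (\<lambda>n. (\<Sum>i<n. Z i x) \<le> real n * (expectation (Z 0) + \<eta>)) sequentially"
    by (rule hoeffding_eventually[OF indZ _ K meanZ \<eta>]) (rule bZ)
  have AEW: "AE x in M. eventually (\<lambda>n. (\<Sum>i<n. W i x) \<le> real n * (2 * expectation (W 0) + 3 * \<eta>)) sequentially"
    by (rule heavy_upper[OF indW iidW _ intW \<eta>]) (rule Wnn)
  from AEZ AEW show ?thesis
  proof eventually_elim
    case (elim x)
    from elim(1,2) show ?case
    proof eventually_elim
      case (elim n)
      have YZW: "Y i x \<le> Z i x + W i x" for i by (auto simp: Z_def W_def)
      have "(\<Sum>i<n. Y i x) \<le> (\<Sum>i<n. Z i x) + (\<Sum>i<n. W i x)"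
        by (simp add: sum.distrib[symmetric] sum_mono YZW)
      also have "\<dots> \<le> real n * (expectation (Z 0) + \<eta>) + real n * (2 * expectation (W 0) + 3 * \<eta>)"
        using elim by (rule add_mono)
      also have "\<dots> = real n * ((expectation (Z 0) + \<eta>) + (2 * expectation (W 0) + 3 * \<eta>))"
        by (simp add: ring_distribs)
      also have "\<dots> \<le> real n * (expectation (Y 0) + \<delta>)"
        by (rule mult_left_mono) (use EZ EW in \<open>auto simp: \<eta>_def\<close>)
      finally show ?case .
    qed
  qed
qed

locale bf_setting =
  fixes M :: "'w measure" and \<mu> :: "'b measure"
    and X :: "nat \<Rightarrow> 'w \<Rightarrow> 'b"
    and f0 :: "'b \<Rightarrow> real"
    and P1 :: "'p measure" and f1 :: "'p \<Rightarrow> 'b \<Rightarrow> real"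
    and P2 :: "'q measure" and f2 :: "'q \<Rightarrow> 'b \<Rightarrow> real"
  assumes M: "prob_space M"
    and mu: "sigma_finite_measure \<mu>"
    and f0_meas: "f0 \<in> borel_measurable \<mu>"
    and f0_nonneg: "\<And>x. x \<in> space \<mu> \<Longrightarrow> f0 x \<ge> 0"
    and indep: "prob_space.indep_vars M (\<lambda>_. \<mu>) X UNIV"
    and distr: "\<And>i. distributed M \<mu> (X i) (\<lambda>x. ennreal (f0 x))"
    and P1: "prob_space P1" and P2: "prob_space P2"
    and f1_meas: "(\<lambda>(\<theta>, x). f1 \<theta> x) \<in> borel_measurable (P1 \<Otimes>\<^sub>M \<mu>)"
    and f2_meas: "(\<lambda>(\<theta>, x). f2 \<theta> x) \<in> borel_measurable (P2 \<Otimes>\<^sub>M \<mu>)"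
    and f1_nonneg: "\<And>\<theta> x. \<theta> \<in> space P1 \<Longrightarrow> x \<in> space \<mu> \<Longrightarrow> f1 \<theta> x \<ge> 0"
    and f2_nonneg: "\<And>\<theta> x. \<theta> \<in> space P2 \<Longrightarrow> x \<in> space \<mu> \<Longrightarrow> f2 \<theta> x \<ge> 0"
    and f1_dens: "\<And>\<theta>. \<theta> \<in> space P1 \<Longrightarrow> (\<integral>\<^sup>+ x. ennreal (f1 \<theta> x) \<partial>\<mu>) = 1"
    and f2_dens: "\<And>\<theta>. \<theta> \<in> space P2 \<Longrightarrow> (\<integral>\<^sup>+ x. ennreal (f2 \<theta> x) \<partial>\<mu>) = 1"
    and KL_support: "\<And>\<epsilon>::real. \<epsilon> > 0 \<Longrightarrow>
          emeasure P2 {\<theta> \<in> space P2. kl_div \<mu> f0 (f2 \<theta>) < ereal \<epsilon>} > 0"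
    and sup_cond: "\<And>c::real. c > 0 \<Longrightarrow>
          AE \<omega> in M. eventually (\<lambda>n.
             (SUP \<theta>\<in>space P1. ennreal (\<Prod>i<n. f1 \<theta> (X i \<omega>) / f0 (X i \<omega>)))
               < ennreal (exp (real n * c))) sequentially"
    and hell: "(INF \<theta>\<in>space P1. hellinger_dist \<mu> (f1 \<theta>) f0) > 0"
begin

sublocale prob_space M by (rule M)
sublocale P1: prob_space P1 by (rule P1)
sublocale P2: prob_space P2 by (rule P2)
sublocale mu: sigma_finite_measure \<mu> by (rule mu)

lemma X_meas[measurable]: "X i \<in> measurable M \<mu>"
  using distr[of i] by (rule distributed_measurable)

lemma f0_meas'[measurable]: "f0 \<in> borel_measurable \<mu>" by (rule f0_meas)

lemma f1_meas'[measurable]: "(\<lambda>p. f1 (fst p) (snd p)) \<in> borel_measurable (P1 \<Otimes>\<^sub>M \<mu>)"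
  using f1_meas by (simp add: case_prod_beta')
lemma f2_meas'[measurable]: "(\<lambda>p. f2 (fst p) (snd p)) \<in> borel_measurable (P2 \<Otimes>\<^sub>M \<mu>)"
  using f2_meas by (simp add: case_prod_beta')

lemma f1_sec[measurable]: "\<theta> \<in> space P1 \<Longrightarrow> f1 \<theta> \<in> borel_measurable \<mu>"
  using measurable_Pair2[OF f1_meas'] by simp
lemma f2_sec[measurable]: "\<theta> \<in> space P2 \<Longrightarrow> f2 \<theta> \<in> borel_measurable \<mu>"
  using measurable_Pair2[OF f2_meas'] by simp

lemma f1_sec2: "x \<in> space \<mu> \<Longrightarrow> (\<lambda>\<theta>. f1 \<theta> x) \<in> borel_measurable P1"
  using measurable_Pair1[OF f1_meas'] by simp
lemma f2_sec2: "x \<in> space \<mu> \<Longrightarrow> (\<lambda>\<theta>. f2 \<theta> x) \<in> borel_measurable P2"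
  using measurable_Pair1[OF f2_meas'] by simp

lemma f1X_meas[measurable]: "(\<lambda>p. f1 (snd p) (X i (fst p))) \<in> borel_measurable (M \<Otimes>\<^sub>M P1)"
proof -
  have "(\<lambda>p. (snd p, X i (fst p))) \<in> measurable (M \<Otimes>\<^sub>M P1) (P1 \<Otimes>\<^sub>M \<mu>)" by measurable
  from measurable_compose[OF this f1_meas'] show ?thesis by simp
qed
lemma f2X_meas[measurable]: "(\<lambda>p. f2 (snd p) (X i (fst p))) \<in> borel_measurable (M \<Otimes>\<^sub>M P2)"
proof -
  have "(\<lambda>p. (snd p, X i (fst p))) \<in> measurable (M \<Otimes>\<^sub>M P2) (P2 \<Otimes>\<^sub>M \<mu>)" by measurable
  from measurable_compose[OF this f2_meas'] show ?thesis by simp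
qed

lemma dens_one: "(\<integral>\<^sup>+x. ennreal (f0 x) \<partial>\<mu>) = 1"
proof -
  have "emeasure M (X 0 -` space \<mu> \<inter> space M) = (\<integral>\<^sup>+x. ennreal (f0 x) * indicator (space \<mu>) x \<partial>\<mu>)"
    by (rule distributed_emeasure[OF distr]) simp
  also have "X 0 -` space \<mu> \<inter> space M = space M" using measurable_space[OF X_meas[of 0]] by auto
  also have "(\<integral>\<^sup>+x. ennreal (f0 x) * indicator (space \<mu>) x \<partial>\<mu>) = (\<integral>\<^sup>+x. ennreal (f0 x) \<partial>\<mu>)"
    by (rule nn_integral_cong) simp
  finally show ?thesis by (simp add: emeasure_space_1)
qed

lemma AE_X:
  assumes "AE x in \<mu>. f0 x \<noteq> 0 \<longrightarrow> P x" and [measurable]: "{x\<in>space \<mu>. P x} \<in> sets \<mu>"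
  shows "AE \<omega> in M. P (X i \<omega>)"
proof -
  have "AE x in density \<mu> (\<lambda>x. ennreal (f0 x)). P x"
    using assms(1) by (subst AE_density) (auto elim!: eventually_mono)
  then have "AE x in distr M \<mu> (X i). P x" unfolding distributed_distr_eq_density[OF distr[of i]] .
  then show ?thesis by (subst (asm) AE_distr_iff) auto
qed

lemma f0X_pos: "AE \<omega> in M. \<forall>i. f0 (X i \<omega>) > 0"
proof (subst AE_all_countable, intro allI)
  fix i
  show "AE \<omega> in M. f0 (X i \<omega>) > 0"
    by (rule AE_X) (use f0_nonneg in \<open>auto intro!: AE_I2 simp: less_le\<close>)
qed

definition "hh = (INF \<theta>\<in>space P1. hellinger_dist \<mu> (f1 \<theta>) f0)"

lemma hh_le: "\<theta> \<in> space P1 \<Longrightarrow> hh \<le> hellinger_dist \<mu> (f1 \<theta>) f0"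
  unfolding hh_def by (rule cINF_lower) (auto simp: bdd_below_def hellinger_dist_def intro!: exI[of _ 0])

lemma hh_pos: "hh > 0" using hell by (simp add: hh_def)

lemma sqrt_ident:
  fixes a b :: real assumes "a \<ge> 0" "b \<ge> 0"
  shows "(sqrt a - sqrt b)\<^sup>2 + 2 * (b * sqrt (a / b)) = a + b"
proof (cases "b = 0")
  case False
  have sb: "sqrt b * sqrt b = b" using assms by simp
  have "b * sqrt (a / b) = (sqrt b * sqrt b) * (sqrt a / sqrt b)" using sb by (simp add: real_sqrt_divide)
  also have "\<dots> = sqrt a * sqrt b" using False assms by (simp add: field_simps)
  finally have "b * sqrt (a / b) = sqrt a * sqrt b" .
  then show ?thesis using assms by (simp add: power2_eq_square algebra_simps)
qed (use assms in simp)

lemma rho_bound: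
  assumes th: "\<theta> \<in> space P1"
  shows "(\<integral>\<^sup>+x. ennreal (f0 x) * ennreal (sqrt (f1 \<theta> x / f0 x)) \<partial>\<mu>) \<le> ennreal (1 - hh\<^sup>2 / 2)"
    and "hh\<^sup>2 \<le> 2"
proof -
  define a where "a = (\<integral>\<^sup>+x. ennreal ((sqrt (f1 \<theta> x) - sqrt (f0 x))\<^sup>2) \<partial>\<mu>)"
  define r where "r = (\<integral>\<^sup>+x. ennreal (f0 x) * ennreal (sqrt (f1 \<theta> x / f0 x)) \<partial>\<mu>)"
  have "(\<integral>\<^sup>+x. ennreal ((sqrt (f1 \<theta> x) - sqrt (f0 x))\<^sup>2) + 2 * (ennreal (f0 x) * ennreal (sqrt (f1 \<theta> x / f0 x))) \<partial>\<mu>)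
      = (\<integral>\<^sup>+x. ennreal (f1 \<theta> x) + ennreal (f0 x) \<partial>\<mu>)"
  proof (rule nn_integral_cong)
    fix x assume x: "x \<in> space \<mu>"
    have n1: "f1 \<theta> x \<ge> 0" "f0 x \<ge> 0" using f1_nonneg[OF th x] f0_nonneg[OF x] by auto
    have "ennreal ((sqrt (f1 \<theta> x) - sqrt (f0 x))\<^sup>2) + 2 * (ennreal (f0 x) * ennreal (sqrt (f1 \<theta> x / f0 x)))
         = ennreal ((sqrt (f1 \<theta> x) - sqrt (f0 x))\<^sup>2 + 2 * (f0 x * sqrt (f1 \<theta> x / f0 x)))"
      using n1 by (simp add: ennreal_mult ennreal_plus)
    also have "\<dots> = ennreal (f1 \<theta> x + f0 x)" using sqrt_ident[OF n1] by simp
    also have "\<dots> = ennreal (f1 \<theta> x) + ennreal (f0 x)" using n1 by (simp add: ennreal_plus)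
    finally show "ennreal ((sqrt (f1 \<theta> x) - sqrt (f0 x))\<^sup>2) + 2 * (ennreal (f0 x) * ennreal (sqrt (f1 \<theta> x / f0 x)))
         = ennreal (f1 \<theta> x) + ennreal (f0 x)" .
  qed
  moreover have "(\<integral>\<^sup>+x. ennreal ((sqrt (f1 \<theta> x) - sqrt (f0 x))\<^sup>2) + 2 * (ennreal (f0 x) * ennreal (sqrt (f1 \<theta> x / f0 x))) \<partial>\<mu>)
     = a + 2 * r"
    unfolding a_def r_def using th
    by (subst nn_integral_add) (auto intro!: nn_integral_cmult)
  moreover have "(\<integral>\<^sup>+x. ennreal (f1 \<theta> x) + ennreal (f0 x) \<partial>\<mu>) = 1 + 1"
    using th by (subst nn_integral_add) (auto simp: f1_dens dens_one)
  ultimately have eq: "a + 2 * r = 2" by (simp add: one_add_one)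
  have "a \<le> a + 2 * r" by (rule add_increasing2) auto
  then have "a \<le> 2" using eq by simp
  then have "a \<noteq> \<infinity>" by (auto simp: top_unique)
  have "2 * r \<le> a + 2 * r" by (rule add_increasing) auto
  then have "2 * r \<le> 2" using eq by simp
  then have "r \<noteq> \<infinity>" by (auto simp: top_unique ennreal_mult_eq_top_iff)
  obtain a' where a': "a = ennreal a'" "a' \<ge> 0" using \<open>a \<noteq> \<infinity>\<close> by (cases a) auto
  obtain r' where r': "r = ennreal r'" "r' \<ge> 0" using \<open>r \<noteq> \<infinity>\<close> by (cases r) auto
  have "ennreal (a' + 2 * r') = ennreal 2" using eq a' r' by (simp add: ennreal_plus ennreal_mult)
  then have ar: "a' + 2 * r' = 2" using a' r' by (subst (asm) ennreal_inj) auto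
  have "hh \<le> sqrt a'" using hh_le[OF th] a' unfolding hellinger_dist_def a_def by simp
  then have "hh\<^sup>2 \<le> (sqrt a')\<^sup>2" by (rule power_mono) (use hh_pos in auto)
  then have "hh\<^sup>2 \<le> a'" using a' by simp
  then have "r' \<le> 1 - hh\<^sup>2 / 2" using ar by linarith
  then show "r \<le> ennreal (1 - hh\<^sup>2 / 2)" unfolding r' by (rule ennreal_leI)
  show "hh\<^sup>2 \<le> 2" using ar r' \<open>hh\<^sup>2 \<le> a'\<close> by linarith
qed

definition "qq = 1 - hh\<^sup>2 / 2"

lemma qq_bounds: "0 \<le> qq" "qq < 1"
proof -
  obtain \<theta> where "\<theta> \<in> space P1" using P1.not_empty by auto
  from rho_bound(2)[OF this] show "0 \<le> qq" unfolding qq_def by simp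
  show "qq < 1" using hh_pos unfolding qq_def by simp
qed

lemma Sq_meas[measurable]:
  "(\<lambda>p. ennreal (\<Prod>i<n. sqrt (f1 (snd p) (X i (fst p)) / f0 (X i (fst p))))) \<in> borel_measurable (M \<Otimes>\<^sub>M P1)"
  by measurable

lemma expect_S:
  "(\<integral>\<^sup>+\<omega>. (\<integral>\<^sup>+\<theta>. ennreal (\<Prod>i<n. sqrt (f1 \<theta> (X i \<omega>) / f0 (X i \<omega>))) \<partial>P1) \<partial>M) \<le> ennreal (qq^n)"
proof -
  interpret MP: pair_sigma_finite M P1 by unfold_locales
  have "(\<integral>\<^sup>+\<omega>. (\<integral>\<^sup>+\<theta>. ennreal (\<Prod>i<n. sqrt (f1 \<theta> (X i \<omega>) / f0 (X i \<omega>))) \<partial>P1) \<partial>M) =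
        (\<integral>\<^sup>+\<theta>. (\<integral>\<^sup>+\<omega>. ennreal (\<Prod>i<n. sqrt (f1 \<theta> (X i \<omega>) / f0 (X i \<omega>))) \<partial>M) \<partial>P1)"
    by (rule MP.Fubini'[symmetric]) (use Sq_meas[of n] in \<open>simp add: case_prod_beta'\<close>)
  also have "\<dots> \<le> (\<integral>\<^sup>+\<theta>. ennreal (qq^n) \<partial>P1)"
  proof (rule nn_integral_mono)
    fix \<theta> assume th: "\<theta> \<in> space P1"
    define g where "g x = ennreal (sqrt (f1 \<theta> x / f0 x))" for x
    have g_meas[measurable]: "g \<in> borel_measurable \<mu>" unfolding g_def using th by measurable
    have "(\<integral>\<^sup>+\<omega>. ennreal (\<Prod>i<n. sqrt (f1 \<theta> (X i \<omega>) / f0 (X i \<omega>))) \<partial>M) = 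
          (\<integral>\<^sup>+\<omega>. (\<Prod>i<n. g (X i \<omega>)) \<partial>M)"
    proof (rule nn_integral_cong)
      fix \<omega> assume "\<omega> \<in> space M"
      then have Xs: "X i \<omega> \<in> space \<mu>" for i using measurable_space[OF X_meas] by auto
      show "ennreal (\<Prod>i<n. sqrt (f1 \<theta> (X i \<omega>) / f0 (X i \<omega>))) = (\<Prod>i<n. g (X i \<omega>))"
        unfolding g_def using Xs th f1_nonneg f0_nonneg by (subst prod_ennreal) auto
    qed
    also have "\<dots> = (\<Prod>i<n. \<integral>\<^sup>+\<omega>. g (X i \<omega>) \<partial>M)"
    proof (rule indep_vars_nn_integral)
      show "indep_vars (\<lambda>_. borel) (\<lambda>i \<omega>. g (X i \<omega>)) {..<n}"
        by (rule indep_vars_compose2[OF indep_vars_subset[OF indep]]) auto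
    qed auto
    also have "\<dots> = (\<Prod>i<n. \<integral>\<^sup>+x. ennreal (f0 x) * g x \<partial>\<mu>)"
      by (rule prod.cong[OF refl]) (rule distributed_nn_integral[OF distr g_meas, symmetric])
    also have "\<dots> \<le> (\<Prod>i<n. ennreal qq)"
      by (rule prod_mono_ennreal) (use rho_bound(1)[OF th] in \<open>simp add: g_def qq_def\<close>)
    also have "\<dots> = ennreal (qq^n)" using qq_bounds by (simp add: ennreal_power)
    finally show "(\<integral>\<^sup>+\<omega>. ennreal (\<Prod>i<n. sqrt (f1 \<theta> (X i \<omega>) / f0 (X i \<omega>))) \<partial>M) \<le> ennreal (qq^n)" .
  qed
  also have "\<dots> = ennreal (qq^n)" by (simp add: P1.emeasure_space_1)
  finally show ?thesis .
qed

definition "ss = sqrt ((1 + qq) / 2)"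

lemma ss_bounds: "0 < ss" "ss < 1" "qq \<le> ss\<^sup>2"
proof -
  have a: "0 < (1 + qq) / 2" "(1 + qq) / 2 < 1" using qq_bounds by auto
  show "0 < ss" "ss < 1" unfolding ss_def using a by auto
  have "ss\<^sup>2 = (1 + qq) / 2" unfolding ss_def using a by simp
  then show "qq \<le> ss\<^sup>2" using qq_bounds by simp
qed

definition "SS n \<omega> = (\<integral>\<^sup>+\<theta>. ennreal (\<Prod>i<n. sqrt (f1 \<theta> (X i \<omega>) / f0 (X i \<omega>))) \<partial>P1)"

lemma SS_meas[measurable]: "SS n \<in> borel_measurable M"
  unfolding SS_def by measurable

lemma SS_eventually:
  "AE \<omega> in M. eventually (\<lambda>n. ennreal (1 / ss^n) * SS n \<omega> < 1) sequentially"
proof -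
  define E where "E n = {\<omega> \<in> space M. 1 \<le> ennreal (1 / ss^n) * SS n \<omega>}" for n
  have E_sets[measurable]: "E n \<in> sets M" for n unfolding E_def by measurable
  have emE: "emeasure M (E n) \<le> ennreal (ss^n)" for n
  proof -
    have "emeasure M (E n) \<le> ennreal (1 / ss^n) * (\<integral>\<^sup>+\<omega>. SS n \<omega> * indicator (space M) \<omega> \<partial>M)"
      unfolding E_def by (rule nn_integral_Markov_inequality) auto
    also have "(\<integral>\<^sup>+\<omega>. SS n \<omega> * indicator (space M) \<omega> \<partial>M) = (\<integral>\<^sup>+\<omega>. SS n \<omega> \<partial>M)"
      by (rule nn_integral_cong) simp
    also have "\<dots> \<le> ennreal (qq^n)" unfolding SS_def by (rule expect_S)
    also have "ennreal (1 / ss^n) * ennreal (qq^n) = ennreal (qq^n / ss^n)"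
      by (subst ennreal_mult[symmetric]) (use ss_bounds qq_bounds in auto)
    also have "qq^n / ss^n \<le> ss^n"
    proof -
      have "qq^n \<le> (ss\<^sup>2)^n" using qq_bounds ss_bounds by (intro power_mono) auto
      then show ?thesis using ss_bounds by (simp add: field_simps power_mult[symmetric] power2_eq_square power_mult_distrib)
    qed
    finally show ?thesis by (simp add: mult_left_mono ennreal_leI)
  qed
  have sumE: "summable (\<lambda>n. measure M (E n))"
  proof (rule summable_comparison_test[OF _ summable_geometric[of ss]])
    show "norm ss < 1" using ss_bounds by simp
    show "\<exists>N. \<forall>n\<ge>N. norm (measure M (E n)) \<le> ss ^ n"
      using emE ss_bounds by (auto simp: emeasure_eq_measure)
  qed
  have "AE \<omega> in M. eventually (\<lambda>n. \<omega> \<in> space M - E n) sequentially"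
    by (rule borel_cantelli_AE1[OF E_sets _ sumE]) (simp add: emeasure_eq_measure)
  then show ?thesis
    by eventually_elim (auto elim!: eventually_mono simp: E_def not_le)
qed

lemma sqrt_prod_lessThan: fixes a :: "nat \<Rightarrow> real" shows "sqrt (\<Prod>i<n. a i) = (\<Prod>i<n. sqrt (a i))"
  by (induction n) (auto simp: real_sqrt_mult)

lemma numer_eventually:
  "AE \<omega> in M. eventually (\<lambda>n. (\<integral>\<^sup>+\<theta>. ennreal (\<Prod>i<n. f1 \<theta> (X i \<omega>) / f0 (X i \<omega>)) \<partial>P1) 
       \<le> ennreal ((sqrt ss)^n)) sequentially"
proof -
  define c where "c = - ln ss"
  have c: "c > 0" using ss_bounds unfolding c_def by simp
  have ec: "exp (real n * c) = (1 / ss)^n" for n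
  proof -
    have "exp (real n * c) = exp c ^ n" by (simp only: exp_of_nat_mult)
    also have "exp c = 1 / ss" unfolding c_def using ss_bounds by (simp add: exp_minus inverse_eq_divide)
    finally show ?thesis .
  qed
  show ?thesis
    using sup_cond[OF c] SS_eventually AE_space
  proof eventually_elim
    case (elim \<omega>)
    from elim(1,2) show ?case
    proof eventually_elim
      case (elim n)
      have Xs: "X i \<omega> \<in> space \<mu>" for i using measurable_space[OF X_meas] \<open>\<omega> \<in> space M\<close> by auto
      define Bn where "Bn = sqrt ((1 / ss)^n)"
      have Bn: "Bn \<ge> 0" unfolding Bn_def using ss_bounds by simp
      have pt: "ennreal (\<Prod>i<n. f1 \<theta> (X i \<omega>) / f0 (X i \<omega>)) \<le> 
                ennreal Bn * ennreal (\<Prod>i<n. sqrt (f1 \<theta> (X i \<omega>) / f0 (X i \<omega>)))" 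
        if th: "\<theta> \<in> space P1" for \<theta>
      proof -
        define R where "R = (\<Prod>i<n. f1 \<theta> (X i \<omega>) / f0 (X i \<omega>))"
        have R0: "R \<ge> 0" unfolding R_def using f1_nonneg[OF th Xs] f0_nonneg[OF Xs]
          by (intro prod_nonneg) auto
        have "ennreal R \<le> (SUP \<theta>\<in>space P1. ennreal (\<Prod>i<n. f1 \<theta> (X i \<omega>) / f0 (X i \<omega>)))"
          unfolding R_def using th by (rule SUP_upper)
        also have "\<dots> < ennreal ((1 / ss)^n)" using elim(1) by (simp add: ec)
        finally have "R < (1 / ss)^n" using R0 by (simp add: ennreal_less_iff)
        then have sR: "sqrt R \<le> Bn" unfolding Bn_def by simp
        have "R = sqrt R * sqrt R" using R0 by simp
        also have "\<dots> \<le> Bn * sqrt R" using sR R0 by (intro mult_right_mono) auto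
        finally have "R \<le> Bn * sqrt R" .
        then have "ennreal R \<le> ennreal (Bn * sqrt R)" by (rule ennreal_leI)
        also have "\<dots> = ennreal Bn * ennreal (sqrt R)" using Bn R0 by (simp add: ennreal_mult)
        also have "sqrt R = (\<Prod>i<n. sqrt (f1 \<theta> (X i \<omega>) / f0 (X i \<omega>)))"
          unfolding R_def by (rule sqrt_prod_lessThan)
        finally show ?thesis unfolding R_def .
      qed
      have "(\<integral>\<^sup>+\<theta>. ennreal (\<Prod>i<n. f1 \<theta> (X i \<omega>) / f0 (X i \<omega>)) \<partial>P1) \<le>
            (\<integral>\<^sup>+\<theta>. ennreal Bn * ennreal (\<Prod>i<n. sqrt (f1 \<theta> (X i \<omega>) / f0 (X i \<omega>))) \<partial>P1)"
        by (rule nn_integral_mono) (rule pt)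
      also have "\<dots> = ennreal Bn * SS n \<omega>" unfolding SS_def
      proof (rule nn_integral_cmult)
        have [measurable]: "(\<lambda>\<theta>. f1 \<theta> (X i \<omega>)) \<in> borel_measurable P1" for i by (rule f1_sec2[OF Xs])
        show "(\<lambda>\<theta>. ennreal (\<Prod>i<n. sqrt (f1 \<theta> (X i \<omega>) / f0 (X i \<omega>)))) \<in> borel_measurable P1"
          by measurable
      qed
      also have "ennreal Bn = ennreal (Bn * ss^n) * ennreal (1 / ss^n)"
        using ss_bounds Bn by (simp add: ennreal_mult[symmetric])
      also have "ennreal (Bn * ss^n) * ennreal (1 / ss^n) * SS n \<omega> \<le> ennreal (Bn * ss^n) * 1"
        unfolding mult.assoc by (rule mult_left_mono) (use elim(2) in auto)
      also have "Bn * ss^n = (sqrt ss)^n"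
      proof -
        have e1: "ss^n = sqrt (ss^n) * sqrt (ss^n)" using ss_bounds by simp
        have e2: "sqrt ((1/ss)^n) * sqrt (ss^n) = 1"
          using ss_bounds by (simp add: real_sqrt_mult[symmetric] power_mult_distrib[symmetric])
        have "Bn * ss^n = (sqrt ((1/ss)^n) * sqrt (ss^n)) * sqrt (ss^n)"
          unfolding Bn_def by (subst e1) (simp add: mult.assoc)
        also have "\<dots> = sqrt (ss^n)" using e2 by simp
        also have "\<dots> = (sqrt ss)^n" by (simp add: real_sqrt_power)
        finally show ?thesis .
      qed
      finally show ?case by simp
    qed
  qed
qed

definition "ww = sqrt (sqrt ss)"
definition "eps = - ln ww / 3"

lemma ww_bounds: "0 < ww" "ww < 1" "ww\<^sup>2 = sqrt ss"
  using ss_bounds unfolding ww_def by auto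

lemma eps_pos: "eps > 0" using ww_bounds unfolding eps_def by simp

lemma ww_pow: "ww^n = exp (- (3 * eps) * real n)"
proof -
  have "exp (- (3 * eps) * real n) = exp (ln ww) ^ n"
    unfolding eps_def by (simp add: exp_of_nat_mult[symmetric] mult.commute)
  then show ?thesis using ww_bounds by simp
qed

definition "AA = {\<theta> \<in> space P2. kl_div \<mu> f0 (f2 \<theta>) < ereal eps}"

lemma AA_pos: "emeasure P2 AA > 0"
  unfolding AA_def by (rule KL_support[OF eps_pos])

lemma AA_sets[measurable]: "AA \<in> sets P2"
  using AA_pos emeasure_notin_sets by fastforce

definition "LL \<theta> x = (if 0 < f0 x \<and> 0 < f2 \<theta> x then ln (f0 x / f2 \<theta> x) else 0)"

lemma LL_meas[measurable]: "\<theta> \<in> space P2 \<Longrightarrow> LL \<theta> \<in> borel_measurable \<mu>"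
  unfolding LL_def by measurable

lemma LL_meas2: "x \<in> space \<mu> \<Longrightarrow> (\<lambda>\<theta>. LL \<theta> x) \<in> borel_measurable P2"
proof -
  assume x: "x \<in> space \<mu>"
  have [measurable]: "(\<lambda>\<theta>. f2 \<theta> x) \<in> borel_measurable P2" by (rule f2_sec2[OF x])
  show ?thesis unfolding LL_def by measurable
qed

lemma LLX_meas[measurable]: "(\<lambda>p. LL (snd p) (X i (fst p))) \<in> borel_measurable (M \<Otimes>\<^sub>M P2)"
  unfolding LL_def by measurable

lemma kl_neg_le: "\<theta> \<in> space P2 \<Longrightarrow> x \<in> space \<mu> \<Longrightarrow> kl_neg f0 (f2 \<theta>) x \<le> ennreal (f2 \<theta> x)"
proof -
  assume th: "\<theta> \<in> space P2" and x: "x \<in> space \<mu>"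
  show ?thesis
  proof (cases "f0 x > 0 \<and> f2 \<theta> x > 0")
    case True
    have "ln (f2 \<theta> x / f0 x) \<le> f2 \<theta> x / f0 x - 1" using True by (intro ln_le_minus_one) auto
    then have "f0 x * ln (f2 \<theta> x / f0 x) \<le> f0 x * (f2 \<theta> x / f0 x - 1)"
      using True by (intro mult_left_mono) auto
    also have "\<dots> = f2 \<theta> x - f0 x" using True by (simp add: field_simps)
    finally have a: "f0 x * ln (f2 \<theta> x / f0 x) \<le> f2 \<theta> x" using True by simp
    have "- (f0 x * ln (f0 x / f2 \<theta> x)) = f0 x * ln (f2 \<theta> x / f0 x)"
      using True by (simp add: ln_div algebra_simps)
    then show ?thesis using True a unfolding kl_neg_def by (simp add: ennreal_leI)
  next
    case False
    then have "kl_neg f0 (f2 \<theta>) x = 0" unfolding kl_neg_def by auto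
    then show ?thesis by simp
  qed
qed

lemma kl_facts:
  assumes th: "\<theta> \<in> AA"
  shows "AE x in \<mu>. 0 < f0 x \<longrightarrow> 0 < f2 \<theta> x"
    and "integrable \<mu> (\<lambda>x. f0 x * LL \<theta> x)"
    and "(\<integral>x. f0 x * LL \<theta> x \<partial>\<mu>) < eps"
proof -
  have thP: "\<theta> \<in> space P2" using th by (simp add: AA_def)
  have [measurable]: "f2 \<theta> \<in> borel_measurable \<mu>" using thP by (rule f2_sec)
  define pos where "pos = (\<integral>\<^sup>+x. kl_pos f0 (f2 \<theta>) x \<partial>\<mu>)"
  define neg where "neg = (\<integral>\<^sup>+x. kl_neg f0 (f2 \<theta>) x \<partial>\<mu>)"
  have mpos[measurable]: "kl_pos f0 (f2 \<theta>) \<in> borel_measurable \<mu>" unfolding kl_pos_def by measurable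
  have mneg[measurable]: "kl_neg f0 (f2 \<theta>) \<in> borel_measurable \<mu>" unfolding kl_neg_def by measurable
  have "neg \<le> (\<integral>\<^sup>+x. ennreal (f2 \<theta> x) \<partial>\<mu>)" unfolding neg_def
    by (rule nn_integral_mono) (rule kl_neg_le[OF thP])
  then have neg1: "neg \<le> 1" using f2_dens[OF thP] by simp
  then have negfin: "neg \<noteq> \<infinity>" by (auto simp: top_unique)
  have kl: "enn2ereal pos - enn2ereal neg < ereal eps"
    using th unfolding AA_def kl_div_def pos_def neg_def by simp
  have posfin: "pos \<noteq> \<infinity>"
  proof
    assume "pos = \<infinity>"
    moreover obtain n' where "neg = ennreal n'" "n' \<ge> 0" using negfin by (cases neg) auto
    ultimately show False using kl by simp
  qed
  have AEpos: "AE x in \<mu>. kl_pos f0 (f2 \<theta>) x \<noteq> \<infinity>"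
    by (rule nn_integral_PInf_AE) (use posfin in \<open>auto simp: pos_def\<close>)
  show AE1: "AE x in \<mu>. 0 < f0 x \<longrightarrow> 0 < f2 \<theta> x"
    using AEpos AE_space
  proof eventually_elim
    case (elim x)
    then have "f2 \<theta> x \<ge> 0" using f2_nonneg[OF thP] by simp
    then show ?case using elim unfolding kl_pos_def by (auto split: if_splits simp: less_le)
  qed
  define F where "F x = f0 x * LL \<theta> x" for x
  have [measurable]: "F \<in> borel_measurable \<mu>" unfolding F_def using thP by measurable
  have AEeq: "AE x in \<mu>. ennreal (F x) = kl_pos f0 (f2 \<theta>) x \<and> ennreal (- F x) = kl_neg f0 (f2 \<theta>) x"
    using AE1 AE_space
  proof eventually_elim
    case (elim x)
    have f0n: "f0 x \<ge> 0" using f0_nonneg elim(2) by simp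
    have f2n: "f2 \<theta> x \<ge> 0" using f2_nonneg[OF thP] elim(2) by simp
    show ?case
    proof (cases "f0 x = 0")
      case True then show ?thesis by (simp add: F_def LL_def kl_pos_def kl_neg_def)
    next
      case False
      then have "0 < f0 x" using f0n by simp
      then have "0 < f2 \<theta> x" using elim(1) by simp
      then show ?thesis using \<open>0 < f0 x\<close> by (simp add: F_def LL_def kl_pos_def kl_neg_def)
    qed
  qed
  have ipos: "(\<integral>\<^sup>+x. ennreal (F x) \<partial>\<mu>) = pos" unfolding pos_def
    by (rule nn_integral_cong_AE) (use AEeq in \<open>auto elim!: eventually_mono\<close>)
  have ineg: "(\<integral>\<^sup>+x. ennreal (- F x) \<partial>\<mu>) = neg" unfolding neg_def
    by (rule nn_integral_cong_AE) (use AEeq in \<open>auto elim!: eventually_mono\<close>)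
  show intF: "integrable \<mu> (\<lambda>x. f0 x * LL \<theta> x)"
    unfolding F_def[symmetric] real_integrable_def using ipos ineg posfin negfin by simp
  have "(\<integral>x. f0 x * LL \<theta> x \<partial>\<mu>) = enn2real pos - enn2real neg"
    using real_lebesgue_integral_def[OF intF] ipos ineg unfolding F_def by simp
  moreover obtain p' where p': "pos = ennreal p'" "p' \<ge> 0" using posfin by (cases pos) auto
  moreover obtain n' where n': "neg = ennreal n'" "n' \<ge> 0" using negfin by (cases neg) auto
  ultimately show "(\<integral>x. f0 x * LL \<theta> x \<partial>\<mu>) < eps" using kl by simp
qed

lemma per_theta:
  assumes th: "\<theta> \<in> AA"
  shows "AE \<omega> in M. (\<forall>i. 0 < f0 (X i \<omega>) \<longrightarrow> 0 < f2 \<theta> (X i \<omega>)) \<and>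
           (\<exists>N. \<forall>n\<ge>N. (\<Sum>i<n. LL \<theta> (X i \<omega>)) \<le> real n * (2 * eps))"
proof -
  have thP: "\<theta> \<in> space P2" using th by (simp add: AA_def)
  have [measurable]: "f2 \<theta> \<in> borel_measurable \<mu>" using thP by (rule f2_sec)
  have [measurable]: "LL \<theta> \<in> borel_measurable \<mu>" using thP by (rule LL_meas)
  have A1: "AE \<omega> in M. \<forall>i. 0 < f0 (X i \<omega>) \<longrightarrow> 0 < f2 \<theta> (X i \<omega>)"
  proof (subst AE_all_countable, intro allI)
    fix i
    show "AE \<omega> in M. 0 < f0 (X i \<omega>) \<longrightarrow> 0 < f2 \<theta> (X i \<omega>)"
      by (rule AE_X) (use kl_facts(1)[OF th] in \<open>auto elim!: eventually_mono\<close>)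
  qed
  define Y where "Y i \<omega> = LL \<theta> (X i \<omega>)" for i \<omega>
  have Yi: "Y i = (\<lambda>\<omega>. LL \<theta> (X i \<omega>))" for i by (rule ext) (simp add: Y_def)
  have indY: "indep_vars (\<lambda>_. borel) Y UNIV"
    unfolding Y_def by (rule indep_vars_compose2[OF indep]) auto
  have dY: "distr M borel (Y i) = distr (density \<mu> (\<lambda>x. ennreal (f0 x))) borel (LL \<theta>)" for i
  proof -
    have "distr M borel (Y i) = distr (distr M \<mu> (X i)) borel (LL \<theta>)"
      by (subst distr_distr) (auto simp: Yi comp_def)
    then show ?thesis by (simp add: distributed_distr_eq_density[OF distr[of i]])
  qed
  have iidY: "distr M borel (Y i) = distr M borel (Y 0)" for i by (simp add: dY)
  have EY: "expectation (Y 0) = (\<integral>x. f0 x * LL \<theta> x \<partial>\<mu>)"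
    unfolding Yi by (rule distributed_integral[OF distr, symmetric]) (auto simp: f0_nonneg)
  have intY: "integrable M (Y 0)"
  proof -
    have "integrable (density \<mu> (\<lambda>x. ennreal (f0 x))) (LL \<theta>)"
      by (subst integrable_density) (use kl_facts(2)[OF th] f0_nonneg in \<open>auto intro!: AE_I2\<close>)
    then have "integrable (distr M \<mu> (X 0)) (LL \<theta>)" by (simp add: distributed_distr_eq_density[OF distr[of 0]])
    then show ?thesis unfolding Yi by (subst (asm) integrable_distr_eq) auto
  qed
  have A2: "AE \<omega> in M. eventually (\<lambda>n. (\<Sum>i<n. Y i \<omega>) \<le> real n * (expectation (Y 0) + eps)) sequentially"
    by (rule slln_upper[OF indY iidY intY eps_pos])
  from A1 A2 show ?thesis
  proof eventually_elim
    case (elim \<omega>)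
    from elim(2) obtain N where N: "\<And>n. n \<ge> N \<Longrightarrow> (\<Sum>i<n. Y i \<omega>) \<le> real n * (expectation (Y 0) + eps)"
      unfolding eventually_sequentially by blast
    have "(\<Sum>i<n. LL \<theta> (X i \<omega>)) \<le> real n * (2 * eps)" if "n \<ge> N" for n
    proof -
      have "(\<Sum>i<n. LL \<theta> (X i \<omega>)) \<le> real n * (expectation (Y 0) + eps)" using N[OF that] by (simp add: Y_def)
      also have "\<dots> \<le> real n * (2 * eps)"
        using kl_facts(3)[OF th] EY by (intro mult_left_mono) auto
      finally show ?thesis .
    qed
    then show ?case using elim(1) by blast
  qed
qed

definition "GG \<theta> \<omega> \<longleftrightarrow> (\<forall>i. 0 < f0 (X i \<omega>) \<longrightarrow> 0 < f2 \<theta> (X i \<omega>)) \<and>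
           (\<exists>N. \<forall>n\<ge>N. (\<Sum>i<n. LL \<theta> (X i \<omega>)) \<le> real n * (2 * eps))"

lemma AE_theta: "AE \<omega> in M. AE \<theta> in P2. \<theta> \<in> AA \<longrightarrow> GG \<theta> \<omega>"
proof -
  interpret MP: pair_sigma_finite M P2 by unfold_locales
  define Bad where "Bad = {p \<in> space (M \<Otimes>\<^sub>M P2). snd p \<in> AA \<and> \<not> GG (snd p) (fst p)}"
  have Bad_sets[measurable]: "Bad \<in> sets (M \<Otimes>\<^sub>M P2)" unfolding Bad_def GG_def by measurable
  have ind_meas[measurable]: "(\<lambda>p. indicator Bad p :: ennreal) \<in> borel_measurable (M \<Otimes>\<^sub>M P2)" by measurable
  have "(\<integral>\<^sup>+\<theta>. (\<integral>\<^sup>+\<omega>. indicator Bad (\<omega>, \<theta>) \<partial>M) \<partial>P2) = (\<integral>\<^sup>+\<theta>. 0 \<partial>P2)"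
  proof (rule nn_integral_cong)
    fix \<theta> assume thP: "\<theta> \<in> space P2"
    show "(\<integral>\<^sup>+\<omega>. indicator Bad (\<omega>, \<theta>) \<partial>M) = 0"
    proof (cases "\<theta> \<in> AA")
      case True
      have "AE \<omega> in M. indicator Bad (\<omega>, \<theta>) = (0::ennreal)"
        using per_theta[OF True] by eventually_elim (auto simp: Bad_def GG_def)
      then show ?thesis by (subst nn_integral_0_iff_AE) (use thP in measurable)
    next
      case False
      then show ?thesis by (simp add: Bad_def)
    qed
  qed
  then have "(\<integral>\<^sup>+\<omega>. (\<integral>\<^sup>+\<theta>. indicator Bad (\<omega>, \<theta>) \<partial>P2) \<partial>M) = 0"
    by (subst MP.Fubini'[symmetric]) (auto simp: case_prod_beta')
  then have "AE \<omega> in M. (\<integral>\<^sup>+\<theta>. indicator Bad (\<omega>, \<theta>) \<partial>P2) = 0"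
    by (subst (asm) nn_integral_0_iff_AE) auto
  then show ?thesis using AE_space
  proof eventually_elim
    case (elim \<omega>)
    have "AE \<theta> in P2. indicator Bad (\<omega>, \<theta>) = (0::ennreal)"
      using elim(1) by (subst (asm) nn_integral_0_iff_AE) (use elim(2) in measurable)
    then show ?case using AE_space
      by eventually_elim (use elim(2) in \<open>auto simp: Bad_def space_pair_measure indicator_def split: if_splits\<close>)
  qed
qed

lemma denom_eventually:
  "AE \<omega> in M. eventually (\<lambda>n. ennreal (ww^n) \<le> (\<integral>\<^sup>+\<theta>. ennreal (\<Prod>i<n. f2 \<theta> (X i \<omega>) / f0 (X i \<omega>)) \<partial>P2)) sequentially"
  using AE_theta f0X_pos AE_space
proof eventually_elim
  case (elim \<omega>)
  have Xs: "X i \<omega> \<in> space \<mu>" for i using measurable_space[OF X_meas] elim(3) by auto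
  have [measurable]: "(\<lambda>\<theta>. f2 \<theta> (X i \<omega>)) \<in> borel_measurable P2" for i by (rule f2_sec2[OF Xs])
  have [measurable]: "(\<lambda>\<theta>. LL \<theta> (X i \<omega>)) \<in> borel_measurable P2" for i by (rule LL_meas2[OF Xs])
  define GN where "GN N = {\<theta> \<in> AA. (\<forall>i. 0 < f0 (X i \<omega>) \<longrightarrow> 0 < f2 \<theta> (X i \<omega>)) \<and>
      (\<forall>n\<ge>N. (\<Sum>i<n. LL \<theta> (X i \<omega>)) \<le> real n * (2 * eps))}" for N
  have GN_sets[measurable]: "GN N \<in> sets P2" for N unfolding GN_def by measurable
  obtain N where posN: "emeasure P2 (GN N) > 0"
  proof (rule ccontr)
    assume "\<not> thesis"
    then have z: "emeasure P2 (GN N) = 0" for N using that by (auto simp: zero_less_iff_neq_zero)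
    have "emeasure P2 (\<Union>N. GN N) = 0" by (rule emeasure_UN_eq_0) (use z in auto)
    moreover have "emeasure P2 AA \<le> emeasure P2 (\<Union>N. GN N)"
    proof (rule emeasure_mono_AE)
      show "AE \<theta> in P2. \<theta> \<in> AA \<longrightarrow> \<theta> \<in> (\<Union>N. GN N)"
        using elim(1) by eventually_elim (auto simp: GG_def GN_def)
    qed measurable
    ultimately show False using AA_pos by simp
  qed
  define p where "p = measure P2 (GN N)"
  have emp: "emeasure P2 (GN N) = ennreal p" unfolding p_def by (simp add: P2.emeasure_eq_measure)
  have p: "p > 0" using posN emp by simp
  obtain K :: nat where K: "- ln p / eps \<le> real K" using real_arch_simple by blast
  show ?case unfolding eventually_sequentially
  proof (intro exI[of _ "max N K"] allI impI)
    fix n assume n: "max N K \<le> n"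
    have pt: "ennreal (exp (- (2 * eps) * real n)) * indicator (GN N) \<theta> \<le> ennreal (\<Prod>i<n. f2 \<theta> (X i \<omega>) / f0 (X i \<omega>))"
      if th: "\<theta> \<in> space P2" for \<theta>
    proof (cases "\<theta> \<in> GN N")
      case True
      have f2p: "0 < f2 \<theta> (X i \<omega>)" for i using True elim(2) unfolding GN_def by auto
      have "(\<Prod>i<n. f2 \<theta> (X i \<omega>) / f0 (X i \<omega>)) = (\<Prod>i<n. exp (- LL \<theta> (X i \<omega>)))"
      proof (rule prod.cong[OF refl])
        fix i
        have "exp (- LL \<theta> (X i \<omega>)) = exp (- ln (f0 (X i \<omega>) / f2 \<theta> (X i \<omega>)))"
          using elim(2) f2p[of i] by (simp add: LL_def)
        also have "\<dots> = f2 \<theta> (X i \<omega>) / f0 (X i \<omega>)"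
          using elim(2) f2p[of i] by (simp add: exp_minus)
        finally show "f2 \<theta> (X i \<omega>) / f0 (X i \<omega>) = exp (- LL \<theta> (X i \<omega>))" by simp
      qed
      also have "\<dots> = exp (- (\<Sum>i<n. LL \<theta> (X i \<omega>)))" by (simp add: exp_sum sum_negf[symmetric])
      also have "exp (- (2 * eps) * real n) \<le> \<dots>"
      proof -
        have "(\<Sum>i<n. LL \<theta> (X i \<omega>)) \<le> real n * (2 * eps)" using True n unfolding GN_def by auto
        then show ?thesis by (simp add: algebra_simps)
      qed
      finally show ?thesis using True by (simp add: ennreal_leI)
    qed simp
    have "ennreal (ww^n) \<le> ennreal (exp (- (2 * eps) * real n) * p)"
    proof (rule ennreal_leI)
      have "- eps * real n \<le> ln p"
      proof -
        have "- ln p \<le> eps * real K" using K eps_pos by (simp add: field_simps)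
        also have "\<dots> \<le> eps * real n" using n eps_pos by (intro mult_left_mono) auto
        finally show ?thesis by simp
      qed
      then have "exp (- eps * real n) \<le> p" using p by (metis exp_le_cancel_iff exp_ln)
      then have m1: "exp (- (2 * eps) * real n) * exp (- eps * real n) \<le> exp (- (2 * eps) * real n) * p"
        by (intro mult_left_mono) auto
      have m2: "exp (- (2 * eps) * real n) * exp (- eps * real n) = ww^n"
        by (simp add: ww_pow exp_add[symmetric] algebra_simps)
      show "ww^n \<le> exp (- (2 * eps) * real n) * p" using m1 unfolding m2 .
    qed
    also have "\<dots> = ennreal (exp (- (2 * eps) * real n)) * emeasure P2 (GN N)"
      using p by (simp add: emp ennreal_mult)
    also have "\<dots> = (\<integral>\<^sup>+\<theta>. ennreal (exp (- (2 * eps) * real n)) * indicator (GN N) \<theta> \<partial>P2)"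
      by (simp add: nn_integral_cmult_indicator)
    also have "\<dots> \<le> (\<integral>\<^sup>+\<theta>. ennreal (\<Prod>i<n. f2 \<theta> (X i \<omega>) / f0 (X i \<omega>)) \<partial>P2)"
      by (rule nn_integral_mono) (rule pt)
    finally show "ennreal (ww^n) \<le> (\<integral>\<^sup>+\<theta>. ennreal (\<Prod>i<n. f2 \<theta> (X i \<omega>) / f0 (X i \<omega>)) \<partial>P2)" .
  qed
qed

lemma main: "AE \<omega> in M. (\<lambda>n. bayes_factor P1 f1 P2 f2 (\<lambda>i. X i \<omega>) n) \<longlonglongrightarrow> 0"
  using numer_eventually denom_eventually f0X_pos AE_space
proof eventually_elim
  case (elim \<omega>)
  note outer = elim
  have Xs: "X i \<omega> \<in> space \<mu>" for i using measurable_space[OF X_meas] elim(4) by auto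
  have [measurable]: "(\<lambda>\<theta>. f2 \<theta> (X i \<omega>)) \<in> borel_measurable P2" for i by (rule f2_sec2[OF Xs])
  have [measurable]: "(\<lambda>\<theta>. f1 \<theta> (X i \<omega>)) \<in> borel_measurable P1" for i by (rule f1_sec2[OF Xs])
  have bound: "eventually (\<lambda>n. bayes_factor P1 f1 P2 f2 (\<lambda>i. X i \<omega>) n \<le> ennreal (ww^n)) sequentially"
    using elim(1,2)
  proof eventually_elim
    case (elim n)
    note elim2 = elim
    define Pf where "Pf = (\<Prod>i<n. f0 (X i \<omega>))"
    have Pf: "Pf > 0" unfolding Pf_def using outer(3) by (intro prod_pos) auto
    have split: "ennreal (\<Prod>i<n. g (X i \<omega>)) = ennreal Pf * ennreal (\<Prod>i<n. g (X i \<omega>) / f0 (X i \<omega>))"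
      if g: "\<And>i. g (X i \<omega>) \<ge> 0" for g
    proof -
      have "(\<Prod>i<n. g (X i \<omega>)) = (\<Prod>i<n. f0 (X i \<omega>) * (g (X i \<omega>) / f0 (X i \<omega>)))"
        by (rule prod.cong[OF refl]) (use outer(3) in \<open>auto simp: less_imp_neq[symmetric]\<close>)
      also have "\<dots> = Pf * (\<Prod>i<n. g (X i \<omega>) / f0 (X i \<omega>))" unfolding Pf_def by (rule prod.distrib)
      finally show ?thesis using Pf g outer(3)
        by (simp add: ennreal_mult prod_nonneg less_imp_le)
    qed
    have ml1: "marginal_lik P1 f1 (\<lambda>i. X i \<omega>) n = ennreal Pf * (\<integral>\<^sup>+\<theta>. ennreal (\<Prod>i<n. f1 \<theta> (X i \<omega>) / f0 (X i \<omega>)) \<partial>P1)"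
    proof -
      have "marginal_lik P1 f1 (\<lambda>i. X i \<omega>) n = (\<integral>\<^sup>+\<theta>. ennreal Pf * ennreal (\<Prod>i<n. f1 \<theta> (X i \<omega>) / f0 (X i \<omega>)) \<partial>P1)"
        unfolding marginal_lik_def by (rule nn_integral_cong) (rule split, use f1_nonneg Xs in auto)
      also have "\<dots> = ennreal Pf * (\<integral>\<^sup>+\<theta>. ennreal (\<Prod>i<n. f1 \<theta> (X i \<omega>) / f0 (X i \<omega>)) \<partial>P1)"
        by (rule nn_integral_cmult) measurable
      finally show ?thesis .
    qed
    have ml2: "marginal_lik P2 f2 (\<lambda>i. X i \<omega>) n = ennreal Pf * (\<integral>\<^sup>+\<theta>. ennreal (\<Prod>i<n. f2 \<theta> (X i \<omega>) / f0 (X i \<omega>)) \<partial>P2)"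
    proof -
      have "marginal_lik P2 f2 (\<lambda>i. X i \<omega>) n = (\<integral>\<^sup>+\<theta>. ennreal Pf * ennreal (\<Prod>i<n. f2 \<theta> (X i \<omega>) / f0 (X i \<omega>)) \<partial>P2)"
        unfolding marginal_lik_def by (rule nn_integral_cong) (rule split, use f2_nonneg Xs in auto)
      also have "\<dots> = ennreal Pf * (\<integral>\<^sup>+\<theta>. ennreal (\<Prod>i<n. f2 \<theta> (X i \<omega>) / f0 (X i \<omega>)) \<partial>P2)"
        by (rule nn_integral_cmult) measurable
      finally show ?thesis .
    qed
    define N' where "N' = (\<integral>\<^sup>+\<theta>. ennreal (\<Prod>i<n. f1 \<theta> (X i \<omega>) / f0 (X i \<omega>)) \<partial>P1)"
    define D' where "D' = (\<integral>\<^sup>+\<theta>. ennreal (\<Prod>i<n. f2 \<theta> (X i \<omega>) / f0 (X i \<omega>)) \<partial>P2)"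
    have N'b: "N' \<le> ennreal ((sqrt ss)^n)" using elim2(1) unfolding N'_def .
    have D'b: "ennreal (ww^n) \<le> D'" using elim2(2) unfolding D'_def .
    have wpos: "ww^n > 0" using ww_bounds by simp
    have lowD: "ennreal (Pf * ww^n) \<le> ennreal Pf * D'"
      using D'b Pf wpos by (simp add: ennreal_mult mult_left_mono)
    have "0 < ennreal (Pf * ww^n)" using Pf wpos by simp
    also note lowD
    finally have D2pos: "0 < ennreal Pf * D'" .
    have "ennreal Pf * N' \<le> ennreal Pf * ennreal ((sqrt ss)^n)" using N'b by (rule mult_left_mono) simp
    also have "\<dots> = ennreal (Pf * ww^n) * ennreal (ww^n)"
    proof -
      have "(sqrt ss)^n = ww^n * ww^n" using ww_bounds(3) by (simp add: power_mult_distrib[symmetric] power2_eq_square)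
      then show ?thesis using Pf wpos by (simp add: ennreal_mult[symmetric] mult.assoc)
    qed
    also have "\<dots> \<le> (ennreal Pf * D') * ennreal (ww^n)" using lowD by (rule mult_right_mono) simp
    finally have num: "ennreal Pf * N' \<le> (ennreal Pf * D') * ennreal (ww^n)" .
    show ?case unfolding bayes_factor_def ml1 ml2 N'_def[symmetric] D'_def[symmetric]
      by (rule divide_le_posI_ennreal[OF D2pos num])
  qed
  have lim: "(\<lambda>n. ennreal (ww^n)) \<longlonglongrightarrow> 0"
  proof -
    have "(\<lambda>n. ww^n) \<longlonglongrightarrow> 0" by (rule LIMSEQ_power_zero) (use ww_bounds in auto)
    then have "(\<lambda>n. ennreal (ww^n)) \<longlonglongrightarrow> ennreal 0" by (rule tendsto_ennrealI)
    then show ?thesis by simp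
  qed
  show ?case
    by (rule tendsto_sandwich[OF _ bound tendsto_const lim]) simp
qed

end

theorem theorem1:
  fixes M :: "'w measure" and \<mu> :: "'b measure"
    and X :: "nat \<Rightarrow> 'w \<Rightarrow> 'b"
    and f0 :: "'b \<Rightarrow> real"
    and P1 :: "'p measure" and f1 :: "'p \<Rightarrow> 'b \<Rightarrow> real"
    and P2 :: "'q measure" and f2 :: "'q \<Rightarrow> 'b \<Rightarrow> real"
  assumes M: "prob_space M"
    and mu: "sigma_finite_measure \<mu>"
    and f0_meas: "f0 \<in> borel_measurable \<mu>"
    and f0_nonneg: "\<And>x. x \<in> space \<mu> \<Longrightarrow> f0 x \<ge> 0"
    and indep: "prob_space.indep_vars M (\<lambda>_. \<mu>) X UNIV"
    and distr: "\<And>i. distributed M \<mu> (X i) (\<lambda>x. ennreal (f0 x))"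
    and P1: "prob_space P1" and P2: "prob_space P2"
    and f1_meas: "(\<lambda>(\<theta>, x). f1 \<theta> x) \<in> borel_measurable (P1 \<Otimes>\<^sub>M \<mu>)"
    and f2_meas: "(\<lambda>(\<theta>, x). f2 \<theta> x) \<in> borel_measurable (P2 \<Otimes>\<^sub>M \<mu>)"
    and f1_nonneg: "\<And>\<theta> x. \<theta> \<in> space P1 \<Longrightarrow> x \<in> space \<mu> \<Longrightarrow> f1 \<theta> x \<ge> 0"
    and f2_nonneg: "\<And>\<theta> x. \<theta> \<in> space P2 \<Longrightarrow> x \<in> space \<mu> \<Longrightarrow> f2 \<theta> x \<ge> 0"
    and f1_dens: "\<And>\<theta>. \<theta> \<in> space P1 \<Longrightarrow> (\<integral>\<^sup>+ x. ennreal (f1 \<theta> x) \<partial>\<mu>) = 1"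
    and f2_dens: "\<And>\<theta>. \<theta> \<in> space P2 \<Longrightarrow> (\<integral>\<^sup>+ x. ennreal (f2 \<theta> x) \<partial>\<mu>) = 1"
    and KL_support: "\<And>\<epsilon>::real. \<epsilon> > 0 \<Longrightarrow>
          emeasure P2 {\<theta> \<in> space P2. kl_div \<mu> f0 (f2 \<theta>) < ereal \<epsilon>} > 0"
    and sup_cond: "\<And>c::real. c > 0 \<Longrightarrow>
          AE \<omega> in M. eventually (\<lambda>n.
             (SUP \<theta>\<in>space P1. ennreal (\<Prod>i<n. f1 \<theta> (X i \<omega>) / f0 (X i \<omega>)))
               < ennreal (exp (real n * c))) sequentially"
    and hell: "(INF \<theta>\<in>space P1. hellinger_dist \<mu> (f1 \<theta>) f0) > 0"
  shows "AE \<omega> in M. (\<lambda>n. bayes_factor P1 f1 P2 f2 (\<lambda>i. X i \<omega>) n) \<longlonglongrightarrow> 0"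
proof -
  interpret bf_setting M \<mu> X f0 P1 f1 P2 f2
    by (rule bf_setting.intro) (fact assms)+
  show ?thesis by (rule main)
qed

end
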